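(* Let $K_0$ be a number field, $K$ a finite Galois extension of $K_0$, $R$ the ring of integers of $K$, and $0\ne b\in R$. Then there exists $z\in R\setminus R^\times$ which is a primitive element of $K/K_0$ such that its conjugates $z^\gamma$, $\gamma\in\operatorname{Gal}(K/K_0)$, are pairwise coprime (i.e. $z^\gamma R+z^{\delta}R=R$ for $\gamma\ne\delta$), and each conjugate of $z$ is coprime to $b$. *)

theory Defs
  imports Complex_Main "HOL-Computational_Algebra.Polynomial"
begin

text \<open>Number fields are modelled as subfields of the complex numbers.\<close>

definition is_subfield :: "complex set \<Rightarrow> bool" where
  "is_subfield S \<longleftrightarrow> 0 \<in> S \<and> 1 \<in> S \<and>
     (\<forall>x\<in>S. \<forall>y\<in>S. x + y \<in> S \<and> x - y \<in> S \<and> x * y \<in> S) \<and>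
     (\<forall>x\<in>S. x \<noteq> 0 \<longrightarrow> inverse x \<in> S)"

definition finite_ext :: "complex set \<Rightarrow> complex set \<Rightarrow> bool" where
  "finite_ext F K \<longleftrightarrow> is_subfield F \<and> is_subfield K \<and> F \<subseteq> K \<and>
     (\<exists>B. finite B \<and> B \<subseteq> K \<and>
        K = {y. \<exists>c. (\<forall>b\<in>B. c b \<in> F) \<and> y = (\<Sum>b\<in>B. c b * b)})"

definition number_field :: "complex set \<Rightarrow> bool" where
  "number_field K \<longleftrightarrow> finite_ext \<rat> K"

definition Gal :: "complex set \<Rightarrow> complex set \<Rightarrow> (complex \<Rightarrow> complex) set" where
  "Gal F K = {\<sigma>. bij_betw \<sigma> K K \<and>
      (\<forall>x\<in>K. \<forall>y\<in>K. \<sigma> (x + y) = \<sigma> x + \<sigma> y \<and> \<sigma> (x * y) = \<sigma> x * \<sigma> y) \<and>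
      (\<forall>x\<in>F. \<sigma> x = x) \<and> (\<forall>x. x \<notin> K \<longrightarrow> \<sigma> x = x)}"

definition galois_ext :: "complex set \<Rightarrow> complex set \<Rightarrow> bool" where
  "galois_ext F K \<longleftrightarrow> finite_ext F K \<and> {x\<in>K. \<forall>\<sigma>\<in>Gal F K. \<sigma> x = x} = F"

definition ring_of_integers :: "complex set \<Rightarrow> complex set" where
  "ring_of_integers K = {x\<in>K. algebraic_int x}"

definition primitive_element :: "complex set \<Rightarrow> complex set \<Rightarrow> complex \<Rightarrow> bool" where
  "primitive_element F K z \<longleftrightarrow> z \<in> K \<and>
     (\<forall>L. is_subfield L \<and> F \<subseteq> L \<and> z \<in> L \<longrightarrow> K \<subseteq> L)"

definition is_unit_in :: "complex set \<Rightarrow> complex \<Rightarrow> bool" where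
  "is_unit_in R x \<longleftrightarrow> x \<in> R \<and> (\<exists>y\<in>R. x * y = 1)"

definition coprime_in :: "complex set \<Rightarrow> complex \<Rightarrow> complex \<Rightarrow> bool" where
  "coprime_in R a b \<longleftrightarrow> (\<exists>u\<in>R. \<exists>v\<in>R. u * a + v * b = 1)"

end

theory Submission
  imports Defs "Jordan_Normal_Form.Char_Poly"
begin


definition zspan :: "(nat \<Rightarrow> complex) \<Rightarrow> nat \<Rightarrow> complex set" where
  "zspan V N = {s. \<exists>c. s = (\<Sum>i<N. of_int (c i) * V i)}"

lemma zspan_add: "a \<in> zspan V N \<Longrightarrow> b \<in> zspan V N \<Longrightarrow> a + b \<in> zspan V N"
proof -
  assume "a \<in> zspan V N" "b \<in> zspan V N"
  then obtain c d where "a = (\<Sum>i<N. of_int (c i) * V i)" "b = (\<Sum>i<N. of_int (d i) * V i)"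
    by (auto simp: zspan_def)
  then have eq: "a + b = (\<Sum>i<N. of_int (c i + d i) * V i)"
    by (simp add: sum.distrib distrib_right)
  show ?thesis unfolding zspan_def
    by (rule CollectI, rule exI[of _ "\<lambda>i. c i + d i"], rule eq)
qed

lemma zspan_zero: "0 \<in> zspan V N"
  unfolding zspan_def by (rule CollectI, rule exI[of _ "\<lambda>_. 0"]) simp

lemma zspan_smult: "a \<in> zspan V N \<Longrightarrow> of_int k * a \<in> zspan V N"
proof -
  assume "a \<in> zspan V N"
  then obtain c where "a = (\<Sum>i<N. of_int (c i) * V i)" by (auto simp: zspan_def)
  then have eq: "of_int k * a = (\<Sum>i<N. of_int (k * c i) * V i)"
    by (simp add: sum_distrib_left mult.assoc)
  show ?thesis unfolding zspan_def
    by (rule CollectI, rule exI[of _ "\<lambda>i. k * c i"], rule eq)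
qed

lemma zspan_basis: "j < N \<Longrightarrow> V j \<in> zspan V N"
proof -
  assume j: "j < N"
  have "(\<Sum>i<N. of_int (if i = j then 1 else 0) * V i) = (\<Sum>i<N. if i = j then V i else 0)"
    by (intro sum.cong) auto
  also have "\<dots> = V j" using j by (simp add: sum.delta)
  finally have "V j = (\<Sum>i<N. of_int (if i = j then 1 else 0) * V i)" by simp
  then show ?thesis by (auto simp: zspan_def)
qed

lemma zspan_sum: "finite A \<Longrightarrow> (\<And>a. a \<in> A \<Longrightarrow> f a \<in> zspan V N) \<Longrightarrow> sum f A \<in> zspan V N"
  by (induction A rule: finite_induct) (auto intro: zspan_add zspan_zero)

lemma zspan_mult_closed:
  assumes "\<And>j. j < N \<Longrightarrow> x * V j \<in> zspan V N" "a \<in> zspan V N"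
  shows "x * a \<in> zspan V N"
proof -
  obtain c where "a = (\<Sum>i<N. of_int (c i) * V i)" using assms(2) by (auto simp: zspan_def)
  then have "x * a = (\<Sum>i<N. of_int (c i) * (x * V i))"
    by (simp add: sum_distrib_left mult.left_commute)
  also have "\<dots> \<in> zspan V N"
    by (intro zspan_sum zspan_smult assms(1)) auto
  finally show ?thesis .
qed

lemma eig_algint:
  fixes M :: "int mat" and v :: "complex vec"
  assumes M: "M \<in> carrier_mat N N" and v: "v \<in> carrier_vec N" "v \<noteq> 0\<^sub>v N"
    and ev: "of_int_hom.mat_hom M *\<^sub>v v = lam \<cdot>\<^sub>v v"
  shows "algebraic_int lam"
proof -
  have M': "of_int_hom.mat_hom M \<in> carrier_mat N N" using M by simp
  have "eigenvalue (of_int_hom.mat_hom M) lam"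
    unfolding eigenvalue_def eigenvector_def using v ev M' by auto
  then have "poly (char_poly (of_int_hom.mat_hom M)) lam = 0"
    using eigenvalue_root_char_poly[OF M'] by metis
  then have "poly (of_int_poly (char_poly M)) lam = 0"
    using of_int_hom.char_poly_hom[OF M] by metis
  moreover have "lead_coeff (char_poly M) = 1"
    using degree_monic_char_poly[OF M] by simp
  ultimately show ?thesis
    unfolding algebraic_int_altdef_ipoly by blast
qed

lemma zspan_algint:
  assumes "V j0 \<noteq> 0" "j0 < N" and cl: "\<And>k. k < N \<Longrightarrow> lam * V k \<in> zspan V N"
  shows "algebraic_int lam"
proof -
  have "\<forall>k. \<exists>c. k < N \<longrightarrow> lam * V k = (\<Sum>i<N. of_int (c i) * V i)"
    using cl by (auto simp: zspan_def)
  then obtain c where c: "\<And>k. k < N \<Longrightarrow> lam * V k = (\<Sum>i<N. of_int (c k i) * V i)"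
    by metis
  define M :: "int mat" where "M = mat N N (\<lambda>(k,i). c k i)"
  define v :: "complex vec" where "v = vec N V"
  have M: "M \<in> carrier_mat N N" by (simp add: M_def)
  have v: "v \<in> carrier_vec N" by (simp add: v_def)
  have v0: "v \<noteq> 0\<^sub>v N"
  proof
    assume "v = 0\<^sub>v N"
    then have "v $ j0 = 0" using assms(2) by simp
    then show False using assms by (simp add: v_def)
  qed
  have "of_int_hom.mat_hom M *\<^sub>v v = lam \<cdot>\<^sub>v v"
  proof (rule eq_vecI)
    fix k assume k: "k < dim_vec (lam \<cdot>\<^sub>v v)"
    then have k': "k < N" by (simp add: v_def)
    have "(of_int_hom.mat_hom M *\<^sub>v v) $ k = (\<Sum>i<N. of_int (c k i) * V i)"
      using k' by (simp add: M_def v_def mult_mat_vec_def scalar_prod_def atLeast0LessThan)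
    also have "\<dots> = (lam \<cdot>\<^sub>v v) $ k" using c[OF k'] k' by (simp add: v_def)
    finally show "(of_int_hom.mat_hom M *\<^sub>v v) $ k = (lam \<cdot>\<^sub>v v) $ k" .
  qed (simp add: M_def v_def)
  then show ?thesis using eig_algint[OF M v v0] by blast
qed

lemma algint_monic:
  assumes "algebraic_int (x::complex)"
  obtains p :: "int poly" where "lead_coeff p = 1" "degree p \<ge> 1"
    "x ^ degree p = - (\<Sum>l<degree p. of_int (coeff p l) * x ^ l)"
proof -
  obtain p :: "int poly" where p: "poly (of_int_poly p) x = 0" "lead_coeff p = 1"
    using assms unfolding algebraic_int_altdef_ipoly by blast
  have "degree p \<noteq> 0"
  proof
    assume "degree p = 0"
    then have "p = [:1:]" using degree_0_id[of p] p(2) by simp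
    then show False using p(1) by simp
  qed
  moreover have "x ^ degree p = - (\<Sum>l<degree p. of_int (coeff p l) * x ^ l)"
  proof -
    have "0 = (\<Sum>i\<le>degree p. of_int (coeff p i) * x ^ i)"
      using p(1) by (simp add: poly_altdef coeff_map_poly degree_map_poly)
    also have "\<dots> = (\<Sum>i<degree p. of_int (coeff p i) * x ^ i) + x ^ degree p"
      using p(2) by (simp add: lessThan_Suc_atMost[symmetric])
    finally show ?thesis by (simp add: eq_neg_iff_add_eq_0 add.commute)
  qed
  ultimately show ?thesis using that p(2) by auto
qed

lemma algint_add_mult:
  assumes x: "algebraic_int (x::complex)" and y: "algebraic_int y"
  shows "algebraic_int (x + y) \<and> algebraic_int (x * y)"
proof -
  obtain p :: "int poly" where p: "degree p \<ge> 1"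
    "x ^ degree p = - (\<Sum>l<degree p. of_int (coeff p l) * x ^ l)"
    using algint_monic[OF x] by blast
  obtain q :: "int poly" where q: "degree q \<ge> 1"
    "y ^ degree q = - (\<Sum>l<degree q. of_int (coeff q l) * y ^ l)"
    using algint_monic[OF y] by blast
  define n where "n = degree p"
  define m where "m = degree q"
  have n: "n \<ge> 1" and m: "m \<ge> 1" using p q by (auto simp: n_def m_def)
  define V where "V = (\<lambda>k. x ^ (k div m) * y ^ (k mod m))"
  define N where "N = n * m"
  have Vij: "V (i * m + j) = x ^ i * y ^ j" if "j < m" for i j
    using that m by (simp add: V_def)
  have idx: "i * m + j < N" if "i < n" "j < m" for i j
  proof -
    have "i * m + j < i * m + m" using that by simp
    also have "\<dots> = (i + 1) * m" by simp
    also have "\<dots> \<le> n * m" using that by (intro mult_right_mono) auto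
    finally show ?thesis by (simp add: N_def)
  qed
  have inV: "x ^ i * y ^ j \<in> zspan V N" if "i < n" "j < m" for i j
    using zspan_basis[OF idx[OF that], of V] Vij[OF that(2)] by simp
  have xcl: "x * V k \<in> zspan V N" if "k < N" for k
  proof -
    define i j where "i = k div m" "j = k mod m"
    have ij: "i < n" "j < m" using that m by (auto simp: i_j_def N_def less_mult_imp_div_less)
    have Vk: "V k = x ^ i * y ^ j" by (simp add: V_def i_j_def)
    show ?thesis
    proof (cases "i + 1 < n")
      case True
      then show ?thesis using inV[OF True ij(2)] Vk by (simp add: mult.assoc)
    next
      case False
      then have "i + 1 = n" using ij by simp
      have "x * V k = x ^ Suc i * y ^ j" unfolding Vk power_Suc by (simp only: mult.assoc)
      then have "x * V k = x ^ n * y ^ j" using \<open>i + 1 = n\<close> by (simp only: Suc_eq_plus1)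
      also have "\<dots> = (\<Sum>l<n. of_int (- coeff p l) * (x ^ l * y ^ j))"
        using p(2) by (simp add: n_def sum_distrib_right sum_negf mult.assoc)
      also have "\<dots> \<in> zspan V N"
        by (intro zspan_sum zspan_smult inV ij) auto
      finally show ?thesis .
    qed
  qed
  have ycl: "y * V k \<in> zspan V N" if "k < N" for k
  proof -
    define i j where "i = k div m" "j = k mod m"
    have ij: "i < n" "j < m" using that m by (auto simp: i_j_def N_def less_mult_imp_div_less)
    have Vk: "V k = x ^ i * y ^ j" by (simp add: V_def i_j_def)
    show ?thesis
    proof (cases "j + 1 < m")
      case True
      then show ?thesis using inV[OF ij(1) True] Vk by (simp add: mult_ac)
    next
      case False
      then have "j + 1 = m" using ij by simp
      have "y * V k = x ^ i * y ^ Suc j" unfolding Vk power_Suc by (simp only: mult_ac)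
      then have "y * V k = x ^ i * y ^ m" using \<open>j + 1 = m\<close> by (simp only: Suc_eq_plus1)
      also have "\<dots> = (\<Sum>l<m. of_int (- coeff q l) * (x ^ i * y ^ l))"
        using q(2) by (simp add: m_def sum_distrib_left sum_negf mult_ac)
      also have "\<dots> \<in> zspan V N"
        by (intro zspan_sum zspan_smult inV ij) auto
      finally show ?thesis .
    qed
  qed
  have V0: "V 0 \<noteq> 0" "0 < N" using n m by (auto simp: V_def N_def)
  have "algebraic_int (x + y)"
    by (rule zspan_algint[of V 0 N, OF V0]) (auto simp: distrib_right intro: zspan_add xcl ycl)
  moreover have "algebraic_int (x * y)"
    by (rule zspan_algint[of V 0 N, OF V0]) (auto simp: mult.assoc intro!: zspan_mult_closed[OF xcl] ycl)
  ultimately show ?thesis ..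
qed

lemma algint_add: "algebraic_int (x::complex) \<Longrightarrow> algebraic_int y \<Longrightarrow> algebraic_int (x + y)"
  using algint_add_mult by blast
lemma algint_mult: "algebraic_int (x::complex) \<Longrightarrow> algebraic_int y \<Longrightarrow> algebraic_int (x * y)"
  using algint_add_mult by blast
lemma algint_diff: "algebraic_int (x::complex) \<Longrightarrow> algebraic_int y \<Longrightarrow> algebraic_int (x - y)"
  using algint_add[of x "-y"] by auto


interpretation ratc: map_poly_comm_ring_hom "of_rat :: rat \<Rightarrow> complex" ..

lemma sf_0: "is_subfield S \<Longrightarrow> 0 \<in> S" and sf_1: "is_subfield S \<Longrightarrow> 1 \<in> S"
  and sf_add: "is_subfield S \<Longrightarrow> x \<in> S \<Longrightarrow> y \<in> S \<Longrightarrow> x + y \<in> S"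
  and sf_diff: "is_subfield S \<Longrightarrow> x \<in> S \<Longrightarrow> y \<in> S \<Longrightarrow> x - y \<in> S"
  and sf_mult: "is_subfield S \<Longrightarrow> x \<in> S \<Longrightarrow> y \<in> S \<Longrightarrow> x * y \<in> S"
  unfolding is_subfield_def by blast+

lemma sf_inv: "is_subfield S \<Longrightarrow> x \<in> S \<Longrightarrow> inverse x \<in> S"
  by (cases "x = 0") (auto simp: is_subfield_def)

lemma sf_minus: "is_subfield S \<Longrightarrow> x \<in> S \<Longrightarrow> - x \<in> S"
  using sf_diff[of S 0 x] sf_0 by simp

lemma sf_divide: "is_subfield S \<Longrightarrow> x \<in> S \<Longrightarrow> y \<in> S \<Longrightarrow> x / y \<in> S"
  by (simp add: divide_inverse sf_mult sf_inv)

lemma sf_power: "is_subfield S \<Longrightarrow> x \<in> S \<Longrightarrow> x ^ n \<in> S"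
  by (induction n) (auto intro: sf_1 sf_mult)

lemma sf_nat: "is_subfield S \<Longrightarrow> of_nat n \<in> S"
  by (induction n) (auto intro: sf_0 sf_1 sf_add)

lemma sf_int: assumes "is_subfield S" shows "of_int k \<in> S"
proof (cases "k \<ge> 0")
  case True
  then have "of_int k = (of_nat (nat k) :: complex)" by simp
  then show ?thesis using sf_nat[OF assms] by metis
next
  case False
  then have "of_int k = - (of_nat (nat (-k)) :: complex)" by simp
  then show ?thesis using sf_minus[OF assms sf_nat[OF assms]] by metis
qed

lemma sf_Ints: "is_subfield S \<Longrightarrow> x \<in> \<int> \<Longrightarrow> x \<in> S"
  by (auto elim: Ints_cases intro: sf_int)

lemma sf_Rats: "is_subfield S \<Longrightarrow> x \<in> \<rat> \<Longrightarrow> x \<in> S"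
proof -
  assume S: "is_subfield S" and "x \<in> \<rat>"
  then obtain a b where "x = of_int a / of_int b" by (auto elim: Rats_cases')
  then show ?thesis using S by (simp add: sf_divide sf_int)
qed

lemma sf_of_rat: "is_subfield S \<Longrightarrow> of_rat r \<in> S"
  by (rule sf_Rats) auto

lemma sf_sum: "is_subfield S \<Longrightarrow> (\<And>a. a \<in> A \<Longrightarrow> f a \<in> S) \<Longrightarrow> sum f A \<in> S"
  by (induction A rule: infinite_finite_induct) (auto intro: sf_0 sf_add)

lemma sf_prod: "is_subfield S \<Longrightarrow> (\<And>a. a \<in> A \<Longrightarrow> f a \<in> S) \<Longrightarrow> prod f A \<in> S"
  by (induction A rule: infinite_finite_induct) (auto intro: sf_1 sf_mult)

lemma sf_poly: "is_subfield S \<Longrightarrow> (\<And>i. coeff p i \<in> S) \<Longrightarrow> x \<in> S \<Longrightarrow> poly p x \<in> S"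
proof (induction p)
  case 0 then show ?case by (simp add: sf_0)
next
  case (pCons a p)
  have "\<And>i. coeff p i \<in> S" using pCons.prems(2)[of "Suc i" for i] by simp
  moreover have "a \<in> S" using pCons.prems(2)[of 0] by simp
  ultimately show ?case using pCons by (simp add: sf_add sf_mult)
qed

definition homK :: "complex set \<Rightarrow> (complex \<Rightarrow> complex) \<Rightarrow> bool" where
  "homK K \<sigma> \<longleftrightarrow> (\<forall>x\<in>K. \<sigma> x \<in> K) \<and>
     (\<forall>x\<in>K. \<forall>y\<in>K. \<sigma> (x + y) = \<sigma> x + \<sigma> y \<and> \<sigma> (x * y) = \<sigma> x * \<sigma> y) \<and>
     \<sigma> 0 = 0 \<and> \<sigma> 1 = 1"

lemma Gal_in: "\<sigma> \<in> Gal F K \<Longrightarrow> x \<in> K \<Longrightarrow> \<sigma> x \<in> K"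
  unfolding Gal_def by (auto dest: bij_betw_apply)

lemma Gal_fix: "\<sigma> \<in> Gal F K \<Longrightarrow> x \<in> F \<Longrightarrow> \<sigma> x = x"
  unfolding Gal_def by auto

lemma Gal_out: "\<sigma> \<in> Gal F K \<Longrightarrow> x \<notin> K \<Longrightarrow> \<sigma> x = x"
  unfolding Gal_def by auto

lemma Gal_add: "\<sigma> \<in> Gal F K \<Longrightarrow> x \<in> K \<Longrightarrow> y \<in> K \<Longrightarrow> \<sigma> (x + y) = \<sigma> x + \<sigma> y"
  and Gal_mult: "\<sigma> \<in> Gal F K \<Longrightarrow> x \<in> K \<Longrightarrow> y \<in> K \<Longrightarrow> \<sigma> (x * y) = \<sigma> x * \<sigma> y"
  unfolding Gal_def by auto

lemma Gal_inj: "\<sigma> \<in> Gal F K \<Longrightarrow> inj_on \<sigma> K"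
  unfolding Gal_def bij_betw_def by auto

lemma Gal_homK:
  assumes "\<sigma> \<in> Gal F K" "is_subfield F" "F \<subseteq> K"
  shows "homK K \<sigma>"
  using assms sf_0[OF assms(2)] sf_1[OF assms(2)]
  unfolding homK_def by (auto intro: Gal_in Gal_add Gal_mult Gal_fix)

context
  fixes K \<sigma> assumes K: "is_subfield K" and h: "homK K \<sigma>"
begin

lemma hK_in: "x \<in> K \<Longrightarrow> \<sigma> x \<in> K" using h unfolding homK_def by auto
lemma hK_add: "x \<in> K \<Longrightarrow> y \<in> K \<Longrightarrow> \<sigma> (x + y) = \<sigma> x + \<sigma> y" using h unfolding homK_def by auto
lemma hK_mult: "x \<in> K \<Longrightarrow> y \<in> K \<Longrightarrow> \<sigma> (x * y) = \<sigma> x * \<sigma> y" using h unfolding homK_def by auto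
lemma hK_0: "\<sigma> 0 = 0" using h unfolding homK_def by auto
lemma hK_1: "\<sigma> 1 = 1" using h unfolding homK_def by auto

lemma hK_minus: "x \<in> K \<Longrightarrow> \<sigma> (- x) = - \<sigma> x"
  using hK_add[of x "-x"] sf_minus[OF K] hK_0 by (simp add: eq_neg_iff_add_eq_0 add.commute)

lemma hK_diff: "x \<in> K \<Longrightarrow> y \<in> K \<Longrightarrow> \<sigma> (x - y) = \<sigma> x - \<sigma> y"
  using hK_add[of x "-y"] hK_minus[of y] sf_minus[OF K] by simp

lemma hK_sum: "(\<And>a. a \<in> A \<Longrightarrow> f a \<in> K) \<Longrightarrow> \<sigma> (sum f A) = (\<Sum>a\<in>A. \<sigma> (f a))"
  by (induction A rule: infinite_finite_induct) (auto simp: hK_0 hK_add sf_sum[OF K])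

lemma hK_prod: "(\<And>a. a \<in> A \<Longrightarrow> f a \<in> K) \<Longrightarrow> \<sigma> (prod f A) = (\<Prod>a\<in>A. \<sigma> (f a))"
  by (induction A rule: infinite_finite_induct) (auto simp: hK_1 hK_mult sf_prod[OF K])

lemma hK_power: "x \<in> K \<Longrightarrow> \<sigma> (x ^ n) = \<sigma> x ^ n"
  by (induction n) (auto simp: hK_1 hK_mult sf_power[OF K])

lemma hK_poly_fixed:
  assumes "\<And>i. coeff p i \<in> K" "\<And>i. \<sigma> (coeff p i) = coeff p i" "x \<in> K"
  shows "\<sigma> (poly p x) = poly p (\<sigma> x)"
  using assms
proof (induction p)
  case 0 then show ?case by (simp add: hK_0)
next
  case (pCons a p)
  have cp: "\<And>i. coeff p i \<in> K" "\<And>i. \<sigma> (coeff p i) = coeff p i"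
    using pCons.prems(1)[of "Suc i" for i] pCons.prems(2)[of "Suc i" for i] by auto
  have a: "a \<in> K" "\<sigma> a = a" using pCons.prems(1)[of 0] pCons.prems(2)[of 0] by auto
  have px: "poly p x \<in> K" using sf_poly[OF K cp(1) pCons.prems(3)] .
  show ?case using a px pCons.prems(3) pCons.IH[OF cp pCons.prems(3)]
    by (simp add: hK_add hK_mult sf_mult[OF K])
qed

end

lemma finite_ext_sf: "finite_ext F K \<Longrightarrow> is_subfield F" "finite_ext F K \<Longrightarrow> is_subfield K"
  "finite_ext F K \<Longrightarrow> F \<subseteq> K"
  unfolding finite_ext_def by auto

lemma finite_ext_enum:
  assumes "finite_ext F K"
  obtains mm :: nat and ee where "\<And>j. j < mm \<Longrightarrow> ee j \<in> K"
    "\<And>y. y \<in> K \<longleftrightarrow> (\<exists>c. (\<forall>j<mm. c j \<in> F) \<and> y = (\<Sum>j<mm. c j * ee j))"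
proof -
  obtain B where B: "finite B" "B \<subseteq> K"
    "K = {y. \<exists>c. (\<forall>b\<in>B. c b \<in> F) \<and> y = (\<Sum>b\<in>B. c b * b)}"
    using assms unfolding finite_ext_def by blast
  have B3: "y \<in> K \<longleftrightarrow> (\<exists>c. (\<forall>b\<in>B. c b \<in> F) \<and> y = (\<Sum>b\<in>B. c b * b))" for y
    by (subst B(3)) (rule mem_Collect_eq)
  obtain e where e: "bij_betw e {0..<card B} B" using ex_bij_betw_nat_finite[OF B(1)] by blast
  define m where "m = card B"
  have e': "bij_betw e {..<m} B" using e by (simp add: m_def atLeast0LessThan)
  have rep: "y \<in> K \<longleftrightarrow> (\<exists>c. (\<forall>j<m. c j \<in> F) \<and> y = (\<Sum>j<m. c j * e j))" for y
  proof
    assume "y \<in> K"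
    then obtain c where c: "\<forall>b\<in>B. c b \<in> F" "y = (\<Sum>b\<in>B. c b * b)" using B3 by blast
    have "y = (\<Sum>j<m. c (e j) * e j)"
      using c(2) sum.reindex_bij_betw[OF e', of "\<lambda>b. c b * b"] by simp
    moreover have "\<forall>j<m. c (e j) \<in> F"
    proof (intro allI impI)
      fix j assume "j < m"
      then have "e j \<in> B" using e' unfolding bij_betw_def by auto
      then show "c (e j) \<in> F" using c(1) by blast
    qed
    ultimately show "\<exists>c. (\<forall>j<m. c j \<in> F) \<and> y = (\<Sum>j<m. c j * e j)" by (intro exI[of _ "\<lambda>j. c (e j)"] conjI)
  next
    assume "\<exists>c. (\<forall>j<m. c j \<in> F) \<and> y = (\<Sum>j<m. c j * e j)"
    then obtain c where c: "\<forall>j<m. c j \<in> F" "y = (\<Sum>j<m. c j * e j)" by blast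
    define d where "d = (\<lambda>b. c (the_inv_into {..<m} e b))"
    have inv: "the_inv_into {..<m} e (e j) = j" if "j < m" for j
      using e' that by (simp add: bij_betw_def the_inv_into_f_f)
    have "y = (\<Sum>j<m. d (e j) * e j)" unfolding c(2)
      by (intro sum.cong refl) (simp add: d_def inv)
    also have "\<dots> = (\<Sum>b\<in>B. d b * b)"
      using sum.reindex_bij_betw[OF e', of "\<lambda>b. d b * b"] by simp
    finally have "y = (\<Sum>b\<in>B. d b * b)" .
    moreover have "\<forall>b\<in>B. d b \<in> F"
    proof
      fix b assume "b \<in> B"
      then obtain j where "j < m" "b = e j" using e' by (auto simp: bij_betw_def)
      then show "d b \<in> F" using c(1) inv by (simp add: d_def)
    qed
    ultimately show "y \<in> K" using B3 by blast
  qed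
  have inK: "\<And>j. j < m \<Longrightarrow> e j \<in> K" using e' B(2) unfolding bij_betw_def by auto
  show ?thesis by (rule that[OF inK rep])
qed


lemma qspan_alg:
  fixes V :: "nat \<Rightarrow> complex"
  assumes "V j0 \<noteq> 0" "j0 < N"
    and cl: "\<And>k. k < N \<Longrightarrow> \<exists>c::nat\<Rightarrow>rat. lam * V k = (\<Sum>i<N. of_rat (c i) * V i)"
  shows "algebraic lam"
proof -
  obtain c where c: "\<And>k. k < N \<Longrightarrow> lam * V k = (\<Sum>i<N. of_rat (c k i) * V i)"
    using cl by metis
  define M :: "rat mat" where "M = mat N N (\<lambda>(k,i). c k i)"
  define v :: "complex vec" where "v = vec N V"
  have M: "M \<in> carrier_mat N N" by (simp add: M_def)
  have M': "of_rat_hom.mat_hom M \<in> carrier_mat N N" using M by simp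
  have v: "v \<in> carrier_vec N" by (simp add: v_def)
  have v0: "v \<noteq> 0\<^sub>v N"
  proof
    assume "v = 0\<^sub>v N"
    then have "v $ j0 = 0" using assms(2) by simp
    then show False using assms by (simp add: v_def)
  qed
  have ev: "of_rat_hom.mat_hom M *\<^sub>v v = lam \<cdot>\<^sub>v v"
  proof (rule eq_vecI)
    fix k assume k: "k < dim_vec (lam \<cdot>\<^sub>v v)"
    then have k': "k < N" by (simp add: v_def)
    have "(of_rat_hom.mat_hom M *\<^sub>v v) $ k = (\<Sum>i<N. of_rat (c k i) * V i)"
      using k' by (simp add: M_def v_def mult_mat_vec_def scalar_prod_def atLeast0LessThan)
    also have "\<dots> = (lam \<cdot>\<^sub>v v) $ k" using c[OF k'] k' by (simp add: v_def)
    finally show "(of_rat_hom.mat_hom M *\<^sub>v v) $ k = (lam \<cdot>\<^sub>v v) $ k" .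
  qed (simp add: M_def v_def)
  have "eigenvalue (of_rat_hom.mat_hom M) lam"
    unfolding eigenvalue_def eigenvector_def using v v0 ev M' by auto
  then have "poly (char_poly (of_rat_hom.mat_hom M)) lam = 0"
    using eigenvalue_root_char_poly[OF M'] by metis
  then have r: "poly (map_poly of_rat (char_poly M)) lam = 0"
    using of_rat_hom.char_poly_hom[OF M] by metis
  have "lead_coeff (char_poly M) = 1"
    using degree_monic_char_poly[OF M] by simp
  then have nz: "map_poly (of_rat :: rat \<Rightarrow> complex) (char_poly M) \<noteq> 0" by auto
  show ?thesis unfolding algebraic_altdef
    by (rule exI[of _ "map_poly of_rat (char_poly M)"]) (use r nz in \<open>auto simp: coeff_map_poly\<close>)
qed

lemma algebraic_scale_int:
  assumes "algebraic (x::complex)"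
  obtains a :: int where "a \<noteq> 0" "algebraic_int (of_int a * x)"
proof -
  obtain p where p: "\<forall>i. coeff p i \<in> \<int>" "p \<noteq> 0" "poly p x = 0"
    using assms unfolding algebraic_def by blast
  have "\<forall>i. \<exists>k. coeff p i = of_int k" using p(1) by (metis Ints_cases)
  then obtain ci where ci: "\<And>i. coeff p i = of_int (ci i)" by metis
  define d where "d = degree p"
  define a where "a = ci d"
  have a0: "a \<noteq> 0" using p(2) ci[of d] by (auto simp: a_def d_def)
  have d0: "d \<noteq> 0"
  proof
    assume "d = 0"
    then have "poly p x = coeff p 0" by (simp add: d_def poly_altdef)
    then show False using p(2,3) \<open>d = 0\<close> by (metis d_def leading_coeff_0_iff)
  qed
  define y where "y = of_int a * x"
  define V where "V = (\<lambda>i::nat. y ^ i)"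
  have px: "(\<Sum>i<d. of_int (ci i) * x ^ i) + of_int a * x ^ d = 0"
  proof -
    have "0 = (\<Sum>i\<le>d. coeff p i * x ^ i)" using p(3) by (simp add: poly_altdef d_def)
    also have "\<dots> = (\<Sum>i<d. coeff p i * x ^ i) + coeff p d * x ^ d"
      by (simp add: lessThan_Suc_atMost[symmetric])
    finally show ?thesis by (simp add: ci a_def)
  qed
  have yd: "y ^ d = (\<Sum>i<d. of_int (- ci i * a ^ (d - 1 - i)) * y ^ i)"
  proof -
    have "y ^ d = of_int a ^ (d - 1) * (of_int a * x ^ d)"
      using d0 by (cases d) (simp_all add: y_def power_mult_distrib mult_ac)
    also have "\<dots> = of_int a ^ (d - 1) * (- (\<Sum>i<d. of_int (ci i) * x ^ i))"
    proof -
      have "of_int a * x ^ d = - (\<Sum>i<d. of_int (ci i) * x ^ i)"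
        using px by (subst eq_neg_iff_add_eq_0) (simp add: add.commute)
      then show ?thesis by (simp only:)
    qed
    also have "\<dots> = - (\<Sum>i<d. of_int a ^ (d - 1) * (of_int (ci i) * x ^ i))"
      by (simp add: sum_distrib_left)
    also have "\<dots> = (\<Sum>i<d. of_int (- ci i * a ^ (d - 1 - i)) * y ^ i)"
      unfolding sum_negf[symmetric]
    proof (intro sum.cong refl)
      fix i assume "i \<in> {..<d}"
      then have "d - 1 = (d - 1 - i) + i" by simp
      then have "(of_int a :: complex) ^ (d - 1) = of_int a ^ (d - 1 - i) * of_int a ^ i"
        by (metis power_add)
      then show "- (of_int a ^ (d - 1) * (of_int (ci i) * x ^ i)) =
          of_int (- ci i * a ^ (d - 1 - i)) * y ^ i"
        by (simp add: y_def power_mult_distrib mult_ac)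
    qed
    finally show ?thesis .
  qed
  have "algebraic_int y"
  proof (rule zspan_algint[of V 0 d])
    show "V 0 \<noteq> 0" "0 < d" using d0 by (auto simp: V_def)
  next
    fix k assume k: "k < d"
    show "y * V k \<in> zspan V d"
    proof (cases "k + 1 < d")
      case True
      then show ?thesis using zspan_basis[OF True, of V] by (simp add: V_def)
    next
      case False
      then have "k + 1 = d" using k by simp
      then have "y * V k = y ^ d" unfolding V_def by (metis Suc_eq_plus1 power_Suc)
      also have "\<dots> \<in> zspan V d" unfolding yd
        by (intro zspan_sum zspan_smult) (auto simp: V_def intro: zspan_basis[of _ d V, simplified V_def])
      finally show ?thesis .
    qed
  qed
  then show ?thesis using that a0 by (simp add: y_def)
qed


lemma sum_divmod:
  fixes f :: "nat \<Rightarrow> nat \<Rightarrow> 'a::comm_monoid_add"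
  shows "(\<Sum>i<n. \<Sum>j<m. f i j) = (\<Sum>k<n*m. f (k div m) (k mod m))"
proof (cases "m = 0")
  case True then show ?thesis by simp
next
  case False
  have bij: "bij_betw (\<lambda>k. (k div m, k mod m)) {..<n*m} ({..<n} \<times> {..<m})"
  proof (rule bij_betwI[where g = "\<lambda>(i,j). i * m + j"])
    show "(\<lambda>k. (k div m, k mod m)) \<in> {..<n * m} \<rightarrow> {..<n} \<times> {..<m}"
      using False by (auto simp: less_mult_imp_div_less)
    show "(\<lambda>(i, j). i * m + j) \<in> {..<n} \<times> {..<m} \<rightarrow> {..<n * m}"
    proof clarsimp
      fix i j assume "i < n" "j < m"
      then have "i * m + j < i * m + m" by simp
      also have "\<dots> = Suc i * m" by simp
      also have "\<dots> \<le> n * m" using \<open>i < n\<close> by (intro mult_right_mono) auto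
      finally show "i * m + j < n * m" .
    qed
    show "\<And>x. x \<in> {..<n * m} \<Longrightarrow> (case (x div m, x mod m) of (i, j) \<Rightarrow> i * m + j) = x"
      by simp
    show "\<And>y. y \<in> {..<n} \<times> {..<m} \<Longrightarrow> ((case y of (i, j) \<Rightarrow> i * m + j) div m, (case y of (i, j) \<Rightarrow> i * m + j) mod m) = y"
      using False by auto
  qed
  have "(\<Sum>i<n. \<Sum>j<m. f i j) = (\<Sum>(i,j)\<in>{..<n} \<times> {..<m}. f i j)"
    by (simp add: sum.cartesian_product)
  also have "\<dots> = (\<Sum>k<n*m. f (k div m) (k mod m))"
    using sum.reindex_bij_betw[OF bij, of "\<lambda>(i,j). f i j"] by simp
  finally show ?thesis .
qed

locale setting =
  fixes K0 K :: "complex set"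
  assumes nf: "number_field K0" and gal: "galois_ext K0 K"
begin

definition G where "G = Gal K0 K"

lemma fe: "finite_ext K0 K" using gal unfolding galois_ext_def by auto
lemma K0sf: "is_subfield K0" using fe by (rule finite_ext_sf)
lemma Ksf: "is_subfield K" using fe by (rule finite_ext_sf)
lemma K0K: "K0 \<subseteq> K" using fe by (rule finite_ext_sf)
lemma QK0: "x \<in> \<rat> \<Longrightarrow> x \<in> K0" using sf_Rats[OF K0sf] .
lemma QK: "x \<in> \<rat> \<Longrightarrow> x \<in> K" using QK0 K0K by auto
lemma fixed: "{x\<in>K. \<forall>\<sigma>\<in>G. \<sigma> x = x} = K0" using gal unfolding galois_ext_def G_def by auto

lemma hom: "\<sigma> \<in> G \<Longrightarrow> homK K \<sigma>"
  using Gal_homK K0sf K0K unfolding G_def by blast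

lemma G_in: "\<sigma> \<in> G \<Longrightarrow> x \<in> K \<Longrightarrow> \<sigma> x \<in> K" using Gal_in unfolding G_def by blast
lemma G_fix: "\<sigma> \<in> G \<Longrightarrow> x \<in> K0 \<Longrightarrow> \<sigma> x = x" using Gal_fix unfolding G_def by blast
lemma G_fixQ: "\<sigma> \<in> G \<Longrightarrow> x \<in> \<rat> \<Longrightarrow> \<sigma> x = x" using G_fix QK0 by blast
lemma G_out: "\<sigma> \<in> G \<Longrightarrow> x \<notin> K \<Longrightarrow> \<sigma> x = x" using Gal_out unfolding G_def by blast
lemma G_add: "\<sigma> \<in> G \<Longrightarrow> x \<in> K \<Longrightarrow> y \<in> K \<Longrightarrow> \<sigma> (x + y) = \<sigma> x + \<sigma> y"
  using Gal_add unfolding G_def by blast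
lemma G_mult: "\<sigma> \<in> G \<Longrightarrow> x \<in> K \<Longrightarrow> y \<in> K \<Longrightarrow> \<sigma> (x * y) = \<sigma> x * \<sigma> y"
  using Gal_mult unfolding G_def by blast
lemma G_inj: "\<sigma> \<in> G \<Longrightarrow> inj_on \<sigma> K" using Gal_inj unfolding G_def by blast

lemma G_id: "(\<lambda>x. x) \<in> G"
  unfolding G_def Gal_def by (auto simp: bij_betw_def)

lemma G_comp: "\<sigma> \<in> G \<Longrightarrow> \<tau> \<in> G \<Longrightarrow> \<sigma> \<circ> \<tau> \<in> G"
proof -
  assume s: "\<sigma> \<in> G" and t: "\<tau> \<in> G"
  have "bij_betw (\<sigma> \<circ> \<tau>) K K"
    using s t unfolding G_def Gal_def by (auto intro: bij_betw_trans)
  moreover have "\<forall>x\<in>K. \<forall>y\<in>K. (\<sigma> \<circ> \<tau>) (x + y) = (\<sigma> \<circ> \<tau>) x + (\<sigma> \<circ> \<tau>) y \<and>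
      (\<sigma> \<circ> \<tau>) (x * y) = (\<sigma> \<circ> \<tau>) x * (\<sigma> \<circ> \<tau>) y"
    using s t by (simp add: G_add G_mult G_in)
  moreover have "\<forall>x\<in>K0. (\<sigma> \<circ> \<tau>) x = x" using s t by (simp add: G_fix)
  moreover have "\<forall>x. x \<notin> K \<longrightarrow> (\<sigma> \<circ> \<tau>) x = x" using s t by (simp add: G_out)
  ultimately show ?thesis unfolding G_def Gal_def by blast
qed

lemma comp_inj: assumes "\<sigma> \<in> G" shows "inj_on (\<lambda>\<tau>. \<sigma> \<circ> \<tau>) G"
proof (rule inj_onI)
  fix \<tau>1 \<tau>2 assume t: "\<tau>1 \<in> G" "\<tau>2 \<in> G" and eq: "\<sigma> \<circ> \<tau>1 = \<sigma> \<circ> \<tau>2"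
  show "\<tau>1 = \<tau>2"
  proof
    fix x show "\<tau>1 x = \<tau>2 x"
    proof (cases "x \<in> K")
      case True
      have "\<sigma> (\<tau>1 x) = \<sigma> (\<tau>2 x)" using eq by (metis comp_apply)
      then show ?thesis using G_inj[OF assms] G_in[OF t(1) True] G_in[OF t(2) True]
        by (auto dest: inj_onD)
    next
      case False then show ?thesis using t by (simp add: G_out)
    qed
  qed
qed

end


context setting
begin

lemma K_alg: assumes x: "x \<in> K" shows "algebraic x"
proof -
  have fq: "finite_ext \<rat> K0" using nf unfolding number_field_def .
  obtain n :: nat and e0 where e0: "\<And>i. i < n \<Longrightarrow> e0 i \<in> K0"
    "\<And>y. y \<in> K0 \<longleftrightarrow> (\<exists>c. (\<forall>i<n. c i \<in> \<rat>) \<and> y = (\<Sum>i<n. c i * e0 i))"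
    by (rule finite_ext_enum[OF fq]) blast
  obtain m :: nat and e where e: "\<And>j. j < m \<Longrightarrow> e j \<in> K"
    "\<And>y. y \<in> K \<longleftrightarrow> (\<exists>c. (\<forall>j<m. c j \<in> K0) \<and> y = (\<Sum>j<m. c j * e j))"
    by (rule finite_ext_enum[OF fe]) blast
  define VV where "VV = (\<lambda>k. e0 (k div m) * e (k mod m))"
  have rep: "\<exists>r::nat\<Rightarrow>rat. y = (\<Sum>k<n*m. of_rat (r k) * VV k)" if y: "y \<in> K" for y
  proof -
    obtain c where c: "\<forall>j<m. c j \<in> K0" "y = (\<Sum>j<m. c j * e j)" using e(2) y by blast
    have "\<forall>j. \<exists>r::nat\<Rightarrow>rat. j < m \<longrightarrow> c j = (\<Sum>i<n. of_rat (r i) * e0 i)"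
    proof (intro allI)
      fix j
      show "\<exists>r::nat\<Rightarrow>rat. j < m \<longrightarrow> c j = (\<Sum>i<n. of_rat (r i) * e0 i)"
      proof (cases "j < m")
        case False then show ?thesis by blast
      next
        case True
        then obtain d where d: "\<forall>i<n. d i \<in> \<rat>" "c j = (\<Sum>i<n. d i * e0 i)"
          using c(1) e0(2) by blast
        have "\<forall>i. \<exists>q. i < n \<longrightarrow> d i = of_rat q" using d(1) by (metis Rats_cases)
        then obtain r where r: "\<And>i. i < n \<Longrightarrow> d i = of_rat (r i)" by metis
        have "c j = (\<Sum>i<n. of_rat (r i) * e0 i)" unfolding d(2)
          by (intro sum.cong refl) (simp add: r)
        then show ?thesis by blast
      qed
    qed
    then obtain r where r: "\<And>j. j < m \<Longrightarrow> c j = (\<Sum>i<n. of_rat (r j i) * e0 i)" by metis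
    have "y = (\<Sum>j<m. (\<Sum>i<n. of_rat (r j i) * e0 i) * e j)" unfolding c(2)
      by (intro sum.cong refl) (simp add: r)
    also have "\<dots> = (\<Sum>j<m. \<Sum>i<n. of_rat (r j i) * (e0 i * e j))"
      by (simp add: sum_distrib_right mult.assoc)
    also have "\<dots> = (\<Sum>i<n. \<Sum>j<m. of_rat (r j i) * (e0 i * e j))"
      by (rule sum.swap)
    also have "\<dots> = (\<Sum>k<n*m. of_rat (r (k mod m) (k div m)) * VV k)"
      unfolding sum_divmod VV_def ..
    finally show ?thesis by (intro exI[of _ "\<lambda>k. r (k mod m) (k div m)"])
  qed
  have VVK: "VV k \<in> K" if "k < n * m" for k
  proof -
    have "k div m < n" "k mod m < m" using that
      by (auto simp: less_mult_imp_div_less) (metis mod_less_divisor mult_0_right neq0_conv not_less0)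
    then show ?thesis unfolding VV_def using e0(1) e(1) K0K sf_mult[OF Ksf] by blast
  qed
  obtain r1 where r1: "1 = (\<Sum>k<n*m. of_rat (r1 k) * VV k)" using rep sf_1[OF Ksf] by blast
  have "\<exists>j0<n*m. VV j0 \<noteq> 0"
  proof (rule ccontr)
    assume "\<not> ?thesis"
    then have "(\<Sum>k<n*m. of_rat (r1 k) * VV k) = 0" by (intro sum.neutral) auto
    then show False using r1 by simp
  qed
  then obtain j0 where j0: "j0 < n*m" "VV j0 \<noteq> 0" by blast
  show ?thesis
  proof (rule qspan_alg[of VV j0 "n*m", OF j0(2) j0(1)])
    fix k assume "k < n * m"
    then have "x * VV k \<in> K" using VVK x sf_mult[OF Ksf] by blast
    then show "\<exists>c::nat\<Rightarrow>rat. x * VV k = (\<Sum>i<n*m. of_rat (c i) * VV i)" using rep by blast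
  qed
qed

lemma G_poly_fixed:
  assumes "\<sigma> \<in> G" "\<And>i. coeff p i \<in> \<int>" "x \<in> K"
  shows "\<sigma> (poly p x) = poly p (\<sigma> x)"
  using hK_poly_fixed[OF Ksf hom[OF assms(1)]] assms QK G_fixQ Ints_subset_Rats by blast

lemma G_algint: "\<sigma> \<in> G \<Longrightarrow> x \<in> K \<Longrightarrow> algebraic_int x \<Longrightarrow> algebraic_int (\<sigma> x)"
proof -
  assume s: "\<sigma> \<in> G" and x: "x \<in> K" "algebraic_int x"
  then obtain p where p: "lead_coeff p = 1" "\<forall>i. coeff p i \<in> \<int>" "poly p x = 0"
    by (auto simp: algebraic_int.simps)
  have "poly p (\<sigma> x) = \<sigma> 0" using G_poly_fixed[OF s _ x(1), of p] p by simp
  also have "\<sigma> 0 = 0" using G_fix[OF s sf_0[OF K0sf]] .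
  finally show ?thesis using p by (intro algebraic_int.intros[of p]) auto
qed

end


context setting
begin

lemma G_eq:
  fixes m :: nat
  assumes e: "\<And>j. j < m \<Longrightarrow> e j \<in> K"
    "\<And>y. y \<in> K \<longleftrightarrow> (\<exists>c. (\<forall>j<m. c j \<in> K0) \<and> y = (\<Sum>j<m. c j * e j))"
    and s: "\<sigma> \<in> G" and t: "\<tau> \<in> G" and agree: "\<And>j. j < m \<Longrightarrow> \<sigma> (e j) = \<tau> (e j)"
  shows "\<sigma> = \<tau>"
proof
  fix x show "\<sigma> x = \<tau> x"
  proof (cases "x \<in> K")
    case True
    then obtain c where c: "\<forall>j<m. c j \<in> K0" "x = (\<Sum>j<m. c j * e j)" using e(2) by blast
    have inK: "c j * e j \<in> K" if "j < m" for j
      using c(1) that e(1) K0K sf_mult[OF Ksf] by blast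
    have "\<rho> x = (\<Sum>j<m. c j * \<rho> (e j))" if r: "\<rho> \<in> G" for \<rho>
    proof -
      have "\<rho> x = (\<Sum>j<m. \<rho> (c j * e j))"
        unfolding c(2) using hK_sum[OF Ksf hom[OF r], of "{..<m}"] inK by simp
      also have "\<dots> = (\<Sum>j<m. c j * \<rho> (e j))"
        by (intro sum.cong refl) (use c(1) e(1) K0K r in \<open>auto simp: G_mult G_fix\<close>)
      finally show ?thesis .
    qed
    note rho = this
    have "\<sigma> x = (\<Sum>j<m. c j * \<sigma> (e j))" by (rule rho[OF s])
    also have "\<dots> = (\<Sum>j<m. c j * \<tau> (e j))" by (intro sum.cong refl) (simp add: agree)
    also have "\<dots> = \<tau> x" by (rule rho[OF t, symmetric])
    finally show ?thesis .
  next
    case False then show ?thesis using s t by (simp add: G_out)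
  qed
qed

lemma G_finite: "finite G"
proof -
  obtain m :: nat and e where e: "\<And>j. j < m \<Longrightarrow> e j \<in> K"
    "\<And>y. y \<in> K \<longleftrightarrow> (\<exists>c. (\<forall>j<m. c j \<in> K0) \<and> y = (\<Sum>j<m. c j * e j))"
    by (rule finite_ext_enum[OF fe]) blast
  have "\<forall>j. \<exists>P. j < m \<longrightarrow> (\<forall>i. coeff P i \<in> \<int>) \<and> P \<noteq> 0 \<and> poly P (e j) = 0"
    using K_alg e(1) unfolding algebraic_def by blast
  then obtain P where P: "\<And>j. j < m \<Longrightarrow> (\<forall>i. coeff (P j) i \<in> \<int>) \<and> P j \<noteq> 0 \<and> poly (P j) (e j) = 0"
    by metis
  define \<Phi> :: "(complex \<Rightarrow> complex) \<Rightarrow> nat \<Rightarrow> complex" where "\<Phi> = (\<lambda>\<sigma>. restrict (\<lambda>j. \<sigma> (e j)) {..<m})"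
  have sub: "\<Phi> ` G \<subseteq> PiE {..<m} (\<lambda>j. {r. poly (P j) r = 0})"
  proof
    fix f assume "f \<in> \<Phi> ` G"
    then obtain \<sigma> where s: "\<sigma> \<in> G" "f = \<Phi> \<sigma>" by blast
    have "poly (P j) (\<sigma> (e j)) = 0" if "j < m" for j
    proof -
      have "poly (P j) (\<sigma> (e j)) = \<sigma> (poly (P j) (e j))"
        using G_poly_fixed[OF s(1), of "P j" "e j"] P[OF that] e(1)[OF that] by simp
      also have "\<dots> = \<sigma> 0" using P[OF that] by simp
      also have "\<dots> = 0" using G_fix[OF s(1) sf_0[OF K0sf]] .
      finally show ?thesis .
    qed
    then show "f \<in> PiE {..<m} (\<lambda>j. {r. poly (P j) r = 0})" using s by (auto simp: \<Phi>_def)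
  qed
  have fin: "finite (PiE {..<m} (\<lambda>j. {r. poly (P j) r = 0}))"
    by (intro finite_PiE) (use P poly_roots_finite in auto)
  have inj: "inj_on \<Phi> G"
  proof (rule inj_onI)
    fix \<sigma> \<tau> assume st: "\<sigma> \<in> G" "\<tau> \<in> G" "\<Phi> \<sigma> = \<Phi> \<tau>"
    have agree: "\<sigma> (e j) = \<tau> (e j)" if "j < m" for j
      using fun_cong[OF st(3), of j] that by (simp add: \<Phi>_def)
    show "\<sigma> = \<tau>" by (rule G_eq[OF e(1) e(2) st(1) st(2) agree])
  qed
  show ?thesis using finite_imageD[OF finite_subset[OF sub fin] inj] .
qed

lemma comp_surj: assumes s: "\<sigma> \<in> G" shows "(\<lambda>\<tau>. \<sigma> \<circ> \<tau>) ` G = G"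
proof -
  have "(\<lambda>\<tau>. \<sigma> \<circ> \<tau>) ` G \<subseteq> G" using G_comp[OF s] by auto
  then show ?thesis using endo_inj_surj[OF G_finite _ comp_inj[OF s]] by blast
qed

lemma exists_w:
  "\<exists>w. w \<in> K \<and> w \<noteq> 0 \<and> algebraic_int w \<and> (\<forall>\<sigma>\<in>G. \<forall>\<tau>\<in>G. \<sigma> \<noteq> \<tau> \<longrightarrow> \<sigma> w \<noteq> \<tau> w)"
proof -
  obtain m :: nat and e where e: "\<And>j. j < m \<Longrightarrow> e j \<in> K"
    "\<And>y. y \<in> K \<longleftrightarrow> (\<exists>c. (\<forall>j<m. c j \<in> K0) \<and> y = (\<Sum>j<m. c j * e j))"
    by (rule finite_ext_enum[OF fe]) blast
  define P :: "(complex \<Rightarrow> complex) \<Rightarrow> complex poly" where "P = (\<lambda>\<sigma>. \<Sum>j<m. monom (\<sigma> (e j)) j)"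
  have coeffP: "coeff (P \<sigma>) i = (if i < m then \<sigma> (e i) else 0)" for \<sigma> i
  proof -
    have "coeff (P \<sigma>) i = (\<Sum>j<m. if j = i then \<sigma> (e j) else 0)"
      unfolding P_def coeff_sum coeff_monom by (auto intro: sum.cong)
    also have "\<dots> = (if i < m then \<sigma> (e i) else 0)" by (simp add: sum.delta')
    finally show ?thesis .
  qed
  define wt where "wt = (\<lambda>t::nat. \<Sum>j<m. of_nat t ^ j * e j)"
  have wtK: "wt t \<in> K" for t
    unfolding wt_def by (intro sf_sum[OF Ksf] sf_mult[OF Ksf] sf_power[OF Ksf] sf_nat[OF Ksf] e(1)) auto
  have swt: "\<sigma> (wt t) = poly (P \<sigma>) (of_nat t)" if s: "\<sigma> \<in> G" for \<sigma> t
  proof -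
    have "\<sigma> (wt t) = (\<Sum>j<m. \<sigma> (of_nat t ^ j * e j))"
      unfolding wt_def
      by (rule hK_sum[OF Ksf hom[OF s]]) (auto intro: sf_mult[OF Ksf] sf_power[OF Ksf] sf_nat[OF Ksf] e(1))
    also have "\<dots> = (\<Sum>j<m. of_nat t ^ j * \<sigma> (e j))"
    proof (intro sum.cong refl)
      fix j assume "j \<in> {..<m}"
      then have "e j \<in> K" by (auto intro: e(1))
      moreover have "(of_nat t ^ j :: complex) \<in> \<rat>" by simp
      ultimately show "\<sigma> (of_nat t ^ j * e j) = of_nat t ^ j * \<sigma> (e j)"
        using s QK by (simp add: G_mult G_fixQ)
    qed
    also have "\<dots> = poly (P \<sigma>) (of_nat t)"
      by (simp add: P_def poly_sum poly_monom mult.commute)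
    finally show ?thesis .
  qed
  have Pinj: "P \<sigma> \<noteq> P \<tau>" if s: "\<sigma> \<in> G" and t: "\<tau> \<in> G" and ne: "\<sigma> \<noteq> \<tau>" for \<sigma> \<tau>
  proof
    assume "P \<sigma> = P \<tau>"
    have agree: "\<sigma> (e j) = \<tau> (e j)" if "j < m" for j
    proof -
      have "coeff (P \<sigma>) j = coeff (P \<tau>) j" using \<open>P \<sigma> = P \<tau>\<close> by simp
      then show ?thesis using coeffP[of \<sigma> j] coeffP[of \<tau> j] that by simp
    qed
    have "\<sigma> = \<tau>" by (rule G_eq[OF e(1) e(2) s t agree])
    then show False using ne by simp
  qed
  have Pid: "P (\<lambda>x. x) \<noteq> 0"
  proof
    assume P0: "P (\<lambda>x. x) = 0"
    have "e j = 0" if "j < m" for j using arg_cong[OF P0, of "\<lambda>p. coeff p j"] that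
      by (simp add: coeffP)
    moreover obtain c where "1 = (\<Sum>j<m. c j * e j)" using e(2) sf_1[OF Ksf] by blast
    ultimately show False by simp
  qed
  define Bad where "Bad = {x. poly (P (\<lambda>x. x)) x = 0} \<union>
     (\<Union>p\<in>{p\<in>G \<times> G. fst p \<noteq> snd p}. {x. poly (P (fst p) - P (snd p)) x = 0})"
  have finBad: "finite Bad"
    unfolding Bad_def
  proof (intro finite_UnI finite_UN_I)
    show "finite {x. poly (P (\<lambda>x. x)) x = 0}" using Pid poly_roots_finite by blast
    show "finite {p \<in> G \<times> G. fst p \<noteq> snd p}" using G_finite by auto
    fix p assume "p \<in> {p \<in> G \<times> G. fst p \<noteq> snd p}"
    then have "P (fst p) - P (snd p) \<noteq> 0" using Pinj by auto
    then show "finite {x. poly (P (fst p) - P (snd p)) x = 0}" using poly_roots_finite by blast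
  qed
  have injn: "inj (of_nat :: nat \<Rightarrow> complex)" by (rule injI) simp
  have "finite {t::nat. of_nat t \<in> Bad}"
    using finite_vimageI[OF finBad injn] by (simp add: vimage_def)
  then obtain t :: nat where t: "of_nat t \<notin> Bad"
    using infinite_UNIV_nat by (metis (mono_tags, lifting) UNIV_I mem_Collect_eq subsetI finite_subset)
  define w0 where "w0 = wt t"
  have w0K: "w0 \<in> K" by (simp add: w0_def wtK)
  have w0nz: "w0 \<noteq> 0"
    using swt[OF G_id, of t] t by (simp add: w0_def Bad_def)
  have w0d: "\<sigma> w0 \<noteq> \<tau> w0" if "\<sigma> \<in> G" "\<tau> \<in> G" "\<sigma> \<noteq> \<tau>" for \<sigma> \<tau>
  proof
    assume "\<sigma> w0 = \<tau> w0"
    then have "poly (P \<sigma> - P \<tau>) (of_nat t) = 0"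
      using swt[OF that(1)] swt[OF that(2)] by (simp add: w0_def)
    then have "of_nat t \<in> Bad" unfolding Bad_def using that by force
    then show False using t by simp
  qed
  obtain a :: int where a: "a \<noteq> 0" "algebraic_int (of_int a * w0)"
    using algebraic_scale_int[OF K_alg[OF w0K]] by blast
  define w where "w = of_int a * w0"
  have wK: "w \<in> K" unfolding w_def by (intro sf_mult[OF Ksf] sf_int[OF Ksf] w0K)
  have sw: "\<sigma> w = of_int a * \<sigma> w0" if "\<sigma> \<in> G" for \<sigma>
    unfolding w_def using that w0K sf_int[OF Ksf, of a] by (simp add: G_mult G_fixQ)
  show ?thesis
  proof (intro exI[of _ w] conjI ballI impI)
    show "w \<in> K" by (rule wK)
    show "w \<noteq> 0" using a(1) w0nz by (simp add: w_def)
    show "algebraic_int w" using a(2) by (simp add: w_def)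
    fix \<sigma> \<tau> assume st: "\<sigma> \<in> G" "\<tau> \<in> G" "\<sigma> \<noteq> \<tau>"
    have "\<sigma> w0 \<noteq> \<tau> w0" by (rule w0d[OF st])
    then show "\<sigma> w \<noteq> \<tau> w" using sw[OF st(1)] sw[OF st(2)] a(1) by simp
  qed
qed

end


lemma algint_poly: "algebraic_int (x::complex) \<Longrightarrow> algebraic_int (poly (of_int_poly q) x)"
proof (induction q)
  case 0 then show ?case by simp
next
  case (pCons a q)
  have "algebraic_int (of_int a :: complex)" by (intro int_imp_algebraic_int) auto
  then show ?case using pCons by (simp add: algint_add algint_mult)
qed

lemma algint_prod_list: "(\<And>a. a \<in> set as \<Longrightarrow> algebraic_int (f a)) \<Longrightarrow> algebraic_int (\<Prod>a\<leftarrow>as. (f a :: complex))"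
  by (induction as) (auto intro: algint_mult)

lemma int_multiple:
  assumes x: "algebraic_int (x::complex)" "x \<noteq> 0" and K: "is_subfield K" "x \<in> K"
  shows "\<exists>n::int. n \<noteq> 0 \<and> (\<exists>e. e \<in> K \<and> algebraic_int e \<and> of_int n = x * e)"
proof -
  define S where "S = {p :: int poly. poly (of_int_poly p) x = 0 \<and> lead_coeff p = 1}"
  obtain p0 where "p0 \<in> S" using x(1) unfolding algebraic_int_altdef_ipoly S_def by blast
  then obtain p where p: "p \<in> S" and pmin: "\<And>p'. p' \<in> S \<Longrightarrow> degree p \<le> degree p'"
    using ex_has_least_nat[of "\<lambda>p. p \<in> S" p0 degree] by blast
  obtain a0 q where pq: "p = pCons a0 q" by (cases p) auto
  have a0: "a0 \<noteq> 0"
  proof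
    assume "a0 = 0"
    have "q \<noteq> 0" using p pq \<open>a0 = 0\<close> by (auto simp: S_def)
    have "0 = poly (of_int_poly p) x" using p by (simp add: S_def)
    also have "\<dots> = x * poly (of_int_poly q) x" using pq \<open>a0 = 0\<close> \<open>q \<noteq> 0\<close> by (simp add: map_poly_pCons)
    finally have "poly (of_int_poly q) x = 0" using x(2) by simp
    moreover have "lead_coeff q = 1" using p pq \<open>q \<noteq> 0\<close> by (simp add: S_def)
    ultimately have "q \<in> S" by (simp add: S_def)
    then have "degree p \<le> degree q" by (rule pmin)
    then show False using pq \<open>q \<noteq> 0\<close> by simp
  qed
  have "0 = poly (of_int_poly p) x" using p by (simp add: S_def)
  also have "\<dots> = of_int a0 + x * poly (of_int_poly q) x" using pq a0 by (simp add: map_poly_pCons)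
  finally have eq: "of_int a0 = x * (- poly (of_int_poly q) x)"
    by (simp add: eq_neg_iff_add_eq_0)
  have eK: "- poly (of_int_poly q) x \<in> K"
    by (intro sf_minus[OF K(1)] sf_poly[OF K(1)] K(2)) (auto simp: coeff_map_poly intro: sf_int[OF K(1)])
  have ea: "algebraic_int (- poly (of_int_poly q) x)" using algint_poly[OF x(1)] by simp
  show ?thesis using a0 eq eK ea by (intro exI[of _ "a0"]) auto
qed


lemma rat_int_poly: "map_poly (of_rat :: rat \<Rightarrow> complex) (map_poly of_int p) = of_int_poly p"
  by (simp add: map_poly_map_poly o_def)

lemma minpoly_exists:
  assumes "algebraic_int (w::complex)"
  obtains q :: "rat poly" where "lead_coeff q = 1" "poly (map_poly of_rat q) w = 0"
    "\<And>f. poly (map_poly of_rat f) w = 0 \<Longrightarrow> q dvd f"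
proof -
  define S where "S = {p :: rat poly. p \<noteq> 0 \<and> poly (map_poly of_rat p) w = 0}"
  obtain p0 :: "int poly" where p0: "poly (of_int_poly p0) w = 0" "lead_coeff p0 = 1"
    using assms unfolding algebraic_int_altdef_ipoly by blast
  have "map_poly of_int p0 \<in> S"
    using p0 unfolding S_def by (auto simp: rat_int_poly)
  then obtain p where p: "p \<in> S" and pmin: "\<And>p'. p' \<in> S \<Longrightarrow> degree p \<le> degree p'"
    using ex_has_least_nat[of "\<lambda>p. p \<in> S" _ degree] by blast
  define q where "q = Polynomial.smult (inverse (lead_coeff p)) p"
  have p0': "p \<noteq> 0" using p by (simp add: S_def)
  have lq: "lead_coeff q = 1" using p0' by (simp add: q_def)
  have rq: "poly (map_poly of_rat q) w = 0"
    using p by (simp add: S_def q_def of_rat_hom.map_poly_hom_smult)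
  have dq: "degree q = degree p" using p0' by (simp add: q_def)
  have "q dvd f" if f: "poly (map_poly of_rat f) w = 0" for f
  proof (rule ccontr)
    assume nd: "\<not> q dvd f"
    have q0: "q \<noteq> 0" using lq by auto
    have "f = q * (f div q) + f mod q" by simp
    then have "map_poly of_rat f = map_poly of_rat q * map_poly of_rat (f div q) + map_poly (of_rat :: rat \<Rightarrow> complex) (f mod q)"
      by (metis ratc.hom_add ratc.hom_mult)
    then have "poly (map_poly of_rat (f mod q)) w = 0" using f rq
      by (metis add_0 mult_zero_left poly_add poly_mult)
    moreover have "f mod q \<noteq> 0" using nd by (simp add: mod_eq_0_iff_dvd)
    ultimately have "f mod q \<in> S" by (simp add: S_def)
    then have "degree p \<le> degree (f mod q)" by (rule pmin)
    moreover have "degree (f mod q) < degree q" using degree_mod_less_degree[OF q0 nd] .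
    ultimately show False using dq by simp
  qed
  then show ?thesis using that lq rq by blast
qed

context
  fixes w :: complex and q :: "rat poly"
  assumes wi: "algebraic_int w" and wnz: "w \<noteq> 0"
    and lq: "lead_coeff q = 1" and rq: "poly (map_poly of_rat q) w = 0"
    and dq: "\<And>f. poly (map_poly of_rat f) w = 0 \<Longrightarrow> q dvd f"
begin

lemma q_nz: "q \<noteq> 0" using lq by auto

lemma rat_root: assumes "poly q s = 0" shows "w = of_rat s"
proof (rule ccontr)
  assume ne: "w \<noteq> of_rat s"
  have "[:-s, 1:] dvd q" using assms by (simp add: poly_eq_0_iff_dvd)
  then obtain r where r: "q = [:-s, 1:] * r" by (elim dvdE)
  have r0: "r \<noteq> 0" using r q_nz by auto
  have "poly (map_poly (of_rat :: rat \<Rightarrow> complex) q) w = poly (map_poly of_rat [:-s, 1:]) w * poly (map_poly of_rat r) w"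
    unfolding r ratc.hom_mult poly_mult ..
  moreover have "poly (map_poly (of_rat :: rat \<Rightarrow> complex) [:-s, 1:]) w = w - of_rat s"
    by (simp add: map_poly_pCons of_rat_minus)
  ultimately have "0 = (w - of_rat s) * poly (map_poly of_rat r) w" using rq by simp
  then have "poly (map_poly of_rat r) w = 0" using ne by simp
  then have "q dvd r" by (rule dq)
  then have "degree q \<le> degree r" using r0 by (rule dvd_imp_degree_le)
  moreover have "degree q = degree [:-s, 1:] + degree r" unfolding r by (rule degree_mult_eq) (use r0 in auto)
  then have "degree q = degree r + 1" by simp
  ultimately show False by simp
qed

lemma q_deg: "degree q \<ge> 1"
proof (rule ccontr)
  assume "\<not> ?thesis"
  then have "degree q = 0" by simp
  then have "q = [:1:]" using lq degree_0_id[of q] by simp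
  then show False using rq by simp
qed

lemma roots:
  obtains as :: "complex list" where "map_poly of_rat q = (\<Prod>a\<leftarrow>as. [:-a, 1:])" "length as = degree q"
proof -
  obtain as where as: "Polynomial.smult (lead_coeff (map_poly (of_rat :: rat \<Rightarrow> complex) q)) (\<Prod>a\<leftarrow>as. [:- a, 1:]) = map_poly of_rat q"
     "length as = degree (map_poly (of_rat :: rat \<Rightarrow> complex) q)"
    using fundamental_theorem_algebra_factorized by blast
  have "lead_coeff (map_poly (of_rat :: rat \<Rightarrow> complex) q) = 1" using lq by simp
  then have "map_poly of_rat q = (\<Prod>a\<leftarrow>as. [:- a, 1:])" using as(1) by simp
  moreover have "length as = degree q" using as(2) by simp
  ultimately show ?thesis by (rule that)
qed

lemma root_of_factor: fixes as :: "complex list" shows "a \<in> set as \<Longrightarrow> poly (\<Prod>a\<leftarrow>as. [:-a, 1:]) a = 0"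
proof (induction as)
  case Nil then show ?case by simp
next
  case (Cons b as)
  have "poly (\<Prod>a\<leftarrow>b # as. [:-a, 1:]) a = (a - b) * poly (\<Prod>a\<leftarrow>as. [:-a, 1:]) a"
    by (simp add: algebra_simps)
  then show ?case using Cons by auto
qed

lemma prod_list_one: "(\<Prod>a\<leftarrow>as. (1::complex)) = 1"
  by (induction as) auto

lemma roots_props:
  fixes as :: "complex list"
  assumes as: "map_poly of_rat q = (\<Prod>a\<leftarrow>as. [:-a, 1:])" and a: "a \<in> set as"
  shows "algebraic_int a" "a \<noteq> 0"
    "\<And>f. poly (map_poly of_rat f) w = 0 \<Longrightarrow> poly (map_poly of_rat f) a = 0"
proof -
  have qa: "poly (map_poly of_rat q) a = 0" using root_of_factor[OF a] as by simp
  show rt: "poly (map_poly of_rat f) a = 0" if fw: "poly (map_poly of_rat f) w = 0" for f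
  proof -
    obtain k where "f = q * k" using dq[OF fw] by (elim dvdE)
    then have "poly (map_poly of_rat f) a = poly (map_poly of_rat q) a * poly (map_poly of_rat k) a"
      by (simp only: ratc.hom_mult poly_mult)
    then show ?thesis using qa by simp
  qed
  obtain p0 :: "int poly" where p0: "poly (of_int_poly p0) w = 0" "lead_coeff p0 = 1"
    using wi unfolding algebraic_int_altdef_ipoly by blast
  have "poly (of_int_poly p0) a = 0"
    using rt[of "map_poly of_int p0"] p0 by (simp add: rat_int_poly)
  then show "algebraic_int a" using p0(2) unfolding algebraic_int_altdef_ipoly by blast
  show "a \<noteq> 0"
  proof
    assume "a = 0"
    then have "poly (map_poly of_rat q) (of_rat 0 :: complex) = 0" using qa by simp
    then have "poly q 0 = 0" by (simp only: of_rat_hom.poly_map_poly) simp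
    then have "w = of_rat 0" by (rule rat_root)
    then show False using wnz by simp
  qed
qed

lemma prod_shift:
  fixes c :: complex assumes "c \<noteq> 0"
  shows "(\<Prod>a\<leftarrow>as. 1 + c * a) = (- c) ^ length as * (\<Prod>a\<leftarrow>as. (- 1 / c) - a)"
  using assms by (induction as) (auto simp: field_simps)

lemma prod_inv: "(\<And>a. a \<in> set as \<Longrightarrow> f a * g a = (1::complex)) \<Longrightarrow>
    (\<Prod>a\<leftarrow>as. f a) * (\<Prod>a\<leftarrow>as. g a) = 1"
proof (induction as)
  case Nil then show ?case by simp
next
  case (Cons b as)
  have "(\<Prod>a\<leftarrow>b # as. f a) * (\<Prod>a\<leftarrow>b # as. g a) = (f b * g b) * ((\<Prod>a\<leftarrow>as. f a) * (\<Prod>a\<leftarrow>as. g a))"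
    by (simp add: mult_ac)
  then show ?case using Cons by simp
qed

lemma NU:
  fixes as :: "complex list"
  assumes as: "map_poly of_rat q = (\<Prod>a\<leftarrow>as. [:-a, 1:])"
    and y: "algebraic_int y" "(1 + of_int c * w) * y = 1"
  shows "(\<Prod>a\<leftarrow>as. 1 + of_int c * a) \<in> {1, -1}"
proof (cases "c = 0")
  case True
  have "(\<Prod>a\<leftarrow>as. 1 + of_int c * a) = (1::complex)" using True by (induction as) auto
  then show ?thesis by simp
next
  case False
  define s :: rat where "s = - 1 / of_int c"
  have ws: "w \<noteq> of_rat s"
  proof
    assume "w = of_rat s"
    then have "1 + of_int c * w = 0" using False by (simp add: s_def of_rat_divide of_rat_minus)
    then show False using y(2) by simp
  qed
  define r0 where "r0 = poly q s"
  have r0: "r0 \<noteq> 0" using rat_root ws unfolding r0_def by blast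
  define sd where "sd = synthetic_div q s"
  have qsd: "[:-s, 1:] * sd + [:r0:] = q" unfolding sd_def r0_def by (rule synthetic_div_correct')
  define k where "k = Polynomial.smult (- 1 / (of_int c * r0)) sd"
  have ev: "poly (map_poly of_rat k) z * (1 + of_int c * z) = 1" if z: "poly (map_poly of_rat q) z = 0" for z :: complex
  proof -
    have "map_poly (of_rat :: rat \<Rightarrow> complex) q = map_poly of_rat [:-s, 1:] * map_poly of_rat sd + map_poly of_rat [:r0:]"
      unfolding qsd[symmetric] ratc.hom_add ratc.hom_mult ..
    moreover have cst: "poly (map_poly (of_rat::rat\<Rightarrow>complex) [:r0:]) z = of_rat r0"
      by (cases "r0 = 0") (simp_all add: map_poly_pCons)
    moreover have lin: "poly (map_poly (of_rat::rat\<Rightarrow>complex) [:-s, 1:]) z = z - of_rat s"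
      by (simp add: map_poly_pCons of_rat_minus)
    ultimately have "poly (map_poly (of_rat :: rat \<Rightarrow> complex) q) z = (z - of_rat s) * poly (map_poly of_rat sd) z + of_rat r0"
      by (simp only: poly_add poly_mult)
    then have e1: "poly (map_poly of_rat sd) z * (z - of_rat s) = - of_rat r0" using z
      by (simp add: eq_neg_iff_add_eq_0 mult.commute)
    have e2: "1 + of_int c * z = of_int c * (z - of_rat s)"
      using False by (simp add: s_def of_rat_divide of_rat_minus field_simps)
    have e3: "poly (map_poly of_rat k) z = of_rat (- 1 / (of_int c * r0)) * poly (map_poly of_rat sd) z"
      unfolding k_def of_rat_hom.map_poly_hom_smult poly_smult ..
    have r0c: "(of_rat r0 :: complex) \<noteq> 0" using r0 by simp
    have "poly (map_poly of_rat k) z * (1 + of_int c * z)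
        = of_rat (- 1 / (of_int c * r0)) * of_int c * (poly (map_poly of_rat sd) z * (z - of_rat s))"
      unfolding e2 e3 by (simp add: mult_ac)
    also have "\<dots> = of_rat (- 1 / (of_int c * r0)) * of_int c * (- of_rat r0)" unfolding e1 ..
    also have "\<dots> = (- 1 / (of_int c * of_rat r0)) * of_int c * (- of_rat r0)"
      by (simp add: of_rat_divide of_rat_mult of_rat_minus)
    also have "\<dots> = 1"
      using False r0c by (simp add: field_simps)
    finally show ?thesis .
  qed
  have yk: "y = poly (map_poly of_rat k) w"
  proof -
    have "(1 + of_int c * w) * poly (map_poly of_rat k) w = 1" using ev[OF rq] by (simp add: mult.commute)
    then show ?thesis using y(2) by (metis mult.left_commute mult_1_right)
  qed
  obtain P :: "int poly" where P: "poly (of_int_poly P) y = 0" "lead_coeff P = 1"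
    using y(1) unfolding algebraic_int_altdef_ipoly by blast
  define F where "F = pcompose (map_poly of_int P :: rat poly) k"
  have mF: "map_poly (of_rat :: rat \<Rightarrow> complex) F = pcompose (of_int_poly P) (map_poly of_rat k)"
    unfolding F_def by (simp add: of_rat_hom.map_poly_pcompose rat_int_poly)
  have Fw: "poly (map_poly of_rat F) w = 0" unfolding mF poly_pcompose using P(1) yk by simp
  have kint: "algebraic_int (poly (map_poly of_rat k) a)" if a: "a \<in> set as" for a
  proof -
    have "poly (map_poly of_rat F) a = 0" by (rule roots_props(3)[OF as a Fw])
    then have "poly (of_int_poly P) (poly (map_poly of_rat k) a) = 0" unfolding mF poly_pcompose .
    then show ?thesis using P(2) unfolding algebraic_int_altdef_ipoly by blast
  qed
  define X where "X = (\<Prod>a\<leftarrow>as. 1 + of_int c * a)"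
  define Y where "Y = (\<Prod>a\<leftarrow>as. poly (map_poly of_rat k) a)"
  have XY: "X * Y = 1" unfolding X_def Y_def
  proof (rule prod_inv)
    fix a assume a: "a \<in> set as"
    have "poly (map_poly of_rat q) a = 0" using root_of_factor[OF a] as by simp
    then show "(1 + of_int c * a) * poly (map_poly of_rat k) a = 1" using ev by (simp add: mult.commute)
  qed
  have Xi: "algebraic_int X" unfolding X_def
    by (intro algint_prod_list algint_add algint_mult int_imp_algebraic_int roots_props(1)[OF as]) auto
  have Yi: "algebraic_int Y" unfolding Y_def by (intro algint_prod_list kint)
  have "X = (- of_int c) ^ length as * (\<Prod>a\<leftarrow>as. (- 1 / of_int c) - a)"
    unfolding X_def by (rule prod_shift) (use False in simp)
  also have "(\<Prod>a\<leftarrow>as. (- 1 / of_int c) - a) = (\<Prod>a\<leftarrow>as. poly [:-a, 1:] (of_rat s))"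
    by (intro arg_cong[where f = prod_list] map_cong refl) (simp add: s_def of_rat_divide of_rat_minus)
  also have "\<dots> = poly (\<Prod>a\<leftarrow>as. [:-a, 1:]) (of_rat s)"
    by (simp add: poly_prod_list o_def)
  also have "\<dots> = poly (map_poly of_rat q) (of_rat s)" using as by simp
  also have "\<dots> = of_rat (poly q s)" by (rule of_rat_hom.poly_map_poly)
  finally have "X \<in> \<rat>" by simp
  then have "X \<in> \<int>" using Xi rational_algebraic_int_is_int by blast
  then obtain u where u: "X = of_int u" by (elim Ints_cases)
  have X0: "X \<noteq> 0" using XY by auto
  have "Y = 1 / X" using XY X0 by (simp add: field_simps)
  then have "Y \<in> \<rat>" using u by simp
  then have "Y \<in> \<int>" using Yi rational_algebraic_int_is_int by blast
  then obtain v where v: "Y = of_int v" by (elim Ints_cases)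
  have "of_int (u * v) = (1 :: complex)" using XY u v by simp
  then have "u * v = 1" by (metis of_int_eq_1_iff)
  then have "u = 1 \<or> u = -1" by (rule pos_zmult_eq_1_iff_lemma)
  then show ?thesis using u by (auto simp: X_def)
qed

end


lemma degree_prod_lin:
  fixes as :: "complex list"
  assumes "\<And>a. a \<in> set as \<Longrightarrow> a \<noteq> 0"
  shows "(\<Prod>a\<leftarrow>as. [:1, a:]) \<noteq> 0 \<and> degree (\<Prod>a\<leftarrow>as. [:1, a:]) = length as"
  using assms
proof (induction as)
  case Nil then show ?case by simp
next
  case (Cons b as)
  then have IH: "(\<Prod>a\<leftarrow>as. [:1, a:]) \<noteq> 0" "degree (\<Prod>a\<leftarrow>as. [:1, a:]) = length as" by auto
  have b0: "b \<noteq> 0" using Cons.prems[of b] by simp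
  have b: "[:1, b:] \<noteq> 0" "degree [:1, b:] = 1" using b0 by auto
  have deg: "degree ([:1, b:] * (\<Prod>a\<leftarrow>as. [:1, a:])) = degree [:1, b:] + degree (\<Prod>a\<leftarrow>as. [:1, a:])"
    by (rule degree_mult_eq[OF b(1) IH(1)])
  have nz: "[:1, b:] * (\<Prod>a\<leftarrow>as. [:1, a:]) \<noteq> 0" using b(1) IH(1) by (metis mult_eq_0_iff)
  have eq: "(\<Prod>a\<leftarrow>b # as. [:1, a:]) = [:1, b:] * (\<Prod>a\<leftarrow>as. [:1, a:])" by simp
  show ?case unfolding eq
  proof (rule conjI[OF nz])
    show "degree ([:1, b:] * (\<Prod>a\<leftarrow>as. [:1, a:])) = length (b # as)"
      by (subst deg) (simp add: IH(2) b0)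
  qed
qed

lemma choose_c:
  assumes wi: "algebraic_int (w::complex)" and wnz: "w \<noteq> 0" and c0: "c0 \<noteq> (0::int)"
  shows "\<exists>m::nat. \<forall>y. algebraic_int y \<longrightarrow> (1 + of_int (int m * c0) * w) * y \<noteq> 1"
proof -
  obtain q :: "rat poly" where lq: "lead_coeff q = 1" and rq: "poly (map_poly of_rat q) w = 0"
    and dq: "\<And>f. poly (map_poly of_rat f) w = 0 \<Longrightarrow> q dvd f"
    using minpoly_exists[OF wi] by blast
  obtain as :: "complex list" where as: "map_poly of_rat q = (\<Prod>a\<leftarrow>as. [:-a, 1:])" "length as = degree q"
    using roots[OF wi wnz lq rq dq] by blast
  have anz: "\<And>a. a \<in> set as \<Longrightarrow> a \<noteq> 0" using roots_props(2)[OF wi wnz lq rq dq as(1)] by blast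
  define QQ where "QQ = (\<Prod>a\<leftarrow>as. [:1, a:])"
  have dQQ: "degree QQ \<ge> 1"
    using degree_prod_lin[OF anz] as(2) q_deg[OF wi wnz lq rq dq] by (simp add: QQ_def)
  have pQQ: "poly QQ x = (\<Prod>a\<leftarrow>as. 1 + x * a)" for x
    by (simp add: QQ_def poly_prod_list o_def mult.commute)
  have n1: "QQ - 1 \<noteq> 0" and n2: "QQ + 1 \<noteq> 0"
  proof -
    show "QQ - 1 \<noteq> 0"
    proof
      assume "QQ - 1 = 0" then have "QQ = 1" by simp
      then show False using dQQ by simp
    qed
    show "QQ + 1 \<noteq> 0"
    proof
      assume "QQ + 1 = 0" then have "QQ = - 1" by (simp add: eq_neg_iff_add_eq_0)
      then show False using dQQ by simp
    qed
  qed
  define Bad where "Bad = {x. poly (QQ - 1) x = 0} \<union> {x. poly (QQ + 1) x = 0}"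
  have finBad: "finite Bad" unfolding Bad_def using poly_roots_finite n1 n2 by blast
  have inj: "inj (\<lambda>m::nat. (of_int (int m * c0) :: complex))"
    by (rule injI) (use c0 in simp)
  have "finite {m::nat. of_int (int m * c0) \<in> Bad}"
    using finite_vimageI[OF finBad inj] by (simp add: vimage_def)
  then obtain m :: nat where m: "of_int (int m * c0) \<notin> Bad"
    using infinite_UNIV_nat by (metis (mono_tags, lifting) UNIV_I mem_Collect_eq subsetI finite_subset)
  have "(\<Prod>a\<leftarrow>as. 1 + of_int (int m * c0) * a) \<notin> {1, -1}"
    using m pQQ[of "of_int (int m * c0)"] by (auto simp: Bad_def)
  then show ?thesis using NU[OF wi wnz lq rq dq as(1)] by blast
qed


definition inK :: "complex set \<Rightarrow> complex poly \<Rightarrow> bool" where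
  "inK K p \<longleftrightarrow> (\<forall>i. coeff p i \<in> K)"

context
  fixes K \<sigma> assumes K: "is_subfield K" and h: "homK K \<sigma>"
begin

lemma inK_0: "inK K 0" and inK_1: "inK K 1"
  using sf_0[OF K] sf_1[OF K] by (auto simp: inK_def coeff_1)

lemma inK_add: "inK K p \<Longrightarrow> inK K q \<Longrightarrow> inK K (p + q)"
  by (auto simp: inK_def intro: sf_add[OF K])

lemma inK_mult: "inK K p \<Longrightarrow> inK K q \<Longrightarrow> inK K (p * q)"
  unfolding inK_def coeff_mult by (auto intro!: sf_sum[OF K] sf_mult[OF K])

lemma inK_smult: "a \<in> K \<Longrightarrow> inK K p \<Longrightarrow> inK K (Polynomial.smult a p)"
  by (auto simp: inK_def intro: sf_mult[OF K])

lemma inK_lin: "x \<in> K \<Longrightarrow> inK K [:- x, 1:]"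
  by (auto simp: inK_def coeff_pCons split: nat.splits intro: sf_minus[OF K] sf_1[OF K] sf_0[OF K])

lemma coeff_mp: "coeff (map_poly \<sigma> p) n = \<sigma> (coeff p n)"
  by (rule coeff_map_poly) (rule hK_0[OF K h])

lemma mp_add: "inK K p \<Longrightarrow> inK K q \<Longrightarrow> map_poly \<sigma> (p + q) = map_poly \<sigma> p + map_poly \<sigma> q"
  by (rule poly_eqI) (simp add: coeff_mp hK_add[OF K h] inK_def)

lemma mp_mult:
  assumes "inK K p" "inK K q"
  shows "map_poly \<sigma> (p * q) = map_poly \<sigma> p * map_poly \<sigma> q"
proof (rule poly_eqI)
  fix n
  have "coeff (map_poly \<sigma> (p * q)) n = \<sigma> (\<Sum>i\<le>n. coeff p i * coeff q (n - i))"
    by (simp add: coeff_mp coeff_mult)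
  also have "\<dots> = (\<Sum>i\<le>n. \<sigma> (coeff p i * coeff q (n - i)))"
    by (rule hK_sum[OF K h]) (use assms in \<open>auto simp: inK_def intro: sf_mult[OF K]\<close>)
  also have "\<dots> = (\<Sum>i\<le>n. \<sigma> (coeff p i) * \<sigma> (coeff q (n - i)))"
    by (intro sum.cong refl) (use assms in \<open>auto simp: inK_def hK_mult[OF K h]\<close>)
  also have "\<dots> = coeff (map_poly \<sigma> p * map_poly \<sigma> q) n"
    by (simp add: coeff_mp coeff_mult)
  finally show "coeff (map_poly \<sigma> (p * q)) n = coeff (map_poly \<sigma> p * map_poly \<sigma> q) n" .
qed

lemma mp_smult: "a \<in> K \<Longrightarrow> inK K p \<Longrightarrow> map_poly \<sigma> (Polynomial.smult a p) = Polynomial.smult (\<sigma> a) (map_poly \<sigma> p)"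
  by (rule poly_eqI) (simp add: coeff_mp hK_mult[OF K h] inK_def)

lemma mp_lin: "x \<in> K \<Longrightarrow> map_poly \<sigma> [:- x, 1:] = [:- \<sigma> x, 1:]"
  by (rule poly_eqI) (auto simp: coeff_mp coeff_pCons hK_minus[OF K h] hK_0[OF K h] hK_1[OF K h] split: nat.splits)

lemma mp_prod:
  "(\<And>a. a \<in> A \<Longrightarrow> inK K (f a)) \<Longrightarrow> inK K (prod f A) \<and> map_poly \<sigma> (prod f A) = (\<Prod>a\<in>A. map_poly \<sigma> (f a))"
proof (induction A rule: infinite_finite_induct)
  case (infinite A) then show ?case using inK_1 by (simp add: map_poly_1 hK_1[OF K h])
next
  case empty then show ?case using inK_1 by (simp add: map_poly_1 hK_1[OF K h])
next
  case (insert x F)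
  then show ?case by (simp add: inK_mult mp_mult)
qed

lemma mp_sum:
  "(\<And>a. a \<in> A \<Longrightarrow> inK K (f a)) \<Longrightarrow> inK K (sum f A) \<and> map_poly \<sigma> (sum f A) = (\<Sum>a\<in>A. map_poly \<sigma> (f a))"
proof (induction A rule: infinite_finite_induct)
  case (infinite A) then show ?case using inK_0 by simp
next
  case empty then show ?case using inK_0 by simp
next
  case (insert x F)
  then show ?case by (simp add: inK_add mp_add)
qed

end


context setting
begin

lemma primitive:
  assumes zK: "z \<in> K" and dist: "\<And>\<sigma> \<tau>. \<sigma> \<in> G \<Longrightarrow> \<tau> \<in> G \<Longrightarrow> \<sigma> \<noteq> \<tau> \<Longrightarrow> \<sigma> z \<noteq> \<tau> z"
  shows "primitive_element K0 K z"
  unfolding primitive_element_def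
proof (intro conjI allI impI subsetI)
  show "z \<in> K" by (rule zK)
  fix L y assume L: "is_subfield L \<and> K0 \<subseteq> L \<and> z \<in> L" and y: "y \<in> K"
  define lin where "lin = (\<lambda>\<gamma>::complex\<Rightarrow>complex. [:- \<gamma> z, 1:])"
  define Pr where "Pr = (\<lambda>\<gamma>. \<Prod>\<delta>\<in>G - {\<gamma>}. lin \<delta>)"
  define g where "g = (\<Sum>\<gamma>\<in>G. Polynomial.smult (\<gamma> y) (Pr \<gamma>))"
  define g0 where "g0 = (\<Sum>\<gamma>\<in>G. Pr \<gamma>)"
  have linK: "inK K (lin \<delta>)" if "\<delta> \<in> G" for \<delta>
    unfolding lin_def by (rule inK_lin[OF Ksf hom[OF G_id]]) (use that zK in \<open>auto intro: G_in\<close>)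
  have PrK: "inK K (Pr \<gamma>)" for \<gamma>
    unfolding Pr_def using mp_prod[OF Ksf hom[OF G_id], of "G - {\<gamma>}" lin] linK by auto
  have gK: "inK K g" unfolding g_def
    using mp_sum[OF Ksf hom[OF G_id], of G "\<lambda>\<gamma>. Polynomial.smult (\<gamma> y) (Pr \<gamma>)"]
      inK_smult[OF Ksf hom[OF G_id]] PrK G_in y by blast
  have g0K: "inK K g0" unfolding g0_def
    using mp_sum[OF Ksf hom[OF G_id], of G Pr] PrK by blast
  have mPr: "map_poly \<sigma> (Pr \<gamma>) = Pr (\<sigma> \<circ> \<gamma>)" if s: "\<sigma> \<in> G" and c: "\<gamma> \<in> G" for \<sigma> \<gamma>
  proof -
    have ml: "map_poly \<sigma> (lin \<delta>) = lin (\<sigma> \<circ> \<delta>)" if d: "\<delta> \<in> G" for \<delta>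
      unfolding lin_def o_def by (rule mp_lin[OF Ksf hom[OF s]]) (rule G_in[OF d zK])
    have "map_poly \<sigma> (Pr \<gamma>) = (\<Prod>\<delta>\<in>G - {\<gamma>}. map_poly \<sigma> (lin \<delta>))"
      unfolding Pr_def using mp_prod[OF Ksf hom[OF s], of "G - {\<gamma>}" lin] linK by auto
    also have "\<dots> = (\<Prod>\<delta>\<in>G - {\<gamma>}. lin (\<sigma> \<circ> \<delta>))"
      by (intro prod.cong refl) (simp add: ml)
    also have "\<dots> = (\<Prod>\<delta>\<in>(\<lambda>\<delta>. \<sigma> \<circ> \<delta>) ` (G - {\<gamma>}). lin \<delta>)"
      using prod.reindex[of "\<lambda>\<delta>. \<sigma> \<circ> \<delta>" "G - {\<gamma>}" lin] inj_on_subset[OF comp_inj[OF s], of "G - {\<gamma>}"]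
      by (auto simp: o_def)
    also have "(\<lambda>\<delta>. \<sigma> \<circ> \<delta>) ` (G - {\<gamma>}) = G - {\<sigma> \<circ> \<gamma>}"
      using inj_on_image_set_diff[OF comp_inj[OF s], of G "{\<gamma>}"] comp_surj[OF s] c by auto
    finally show ?thesis by (simp add: Pr_def)
  qed
  have fixg: "map_poly \<sigma> g = g" if s: "\<sigma> \<in> G" for \<sigma>
  proof -
    have "map_poly \<sigma> g = (\<Sum>\<gamma>\<in>G. map_poly \<sigma> (Polynomial.smult (\<gamma> y) (Pr \<gamma>)))"
      unfolding g_def using mp_sum[OF Ksf hom[OF s], of G "\<lambda>\<gamma>. Polynomial.smult (\<gamma> y) (Pr \<gamma>)"]
        inK_smult[OF Ksf hom[OF G_id]] PrK G_in y by blast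
    also have "\<dots> = (\<Sum>\<gamma>\<in>G. Polynomial.smult ((\<sigma> \<circ> \<gamma>) y) (Pr (\<sigma> \<circ> \<gamma>)))"
      by (intro sum.cong refl) (simp add: mp_smult[OF Ksf hom[OF s]] G_in y PrK mPr[OF s])
    also have "\<dots> = (\<Sum>\<gamma>\<in>(\<lambda>\<gamma>. \<sigma> \<circ> \<gamma>) ` G. Polynomial.smult (\<gamma> y) (Pr \<gamma>))"
      using sum.reindex[OF comp_inj[OF s], of "\<lambda>\<gamma>. Polynomial.smult (\<gamma> y) (Pr \<gamma>)"] by (simp add: o_def)
    also have "\<dots> = g" unfolding comp_surj[OF s] g_def ..
    finally show ?thesis .
  qed
  have fixg0: "map_poly \<sigma> g0 = g0" if s: "\<sigma> \<in> G" for \<sigma>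
  proof -
    have "map_poly \<sigma> g0 = (\<Sum>\<gamma>\<in>G. map_poly \<sigma> (Pr \<gamma>))"
      unfolding g0_def using mp_sum[OF Ksf hom[OF s], of G Pr] PrK by blast
    also have "\<dots> = (\<Sum>\<gamma>\<in>G. Pr (\<sigma> \<circ> \<gamma>))"
      by (intro sum.cong refl) (simp add: mPr[OF s])
    also have "\<dots> = (\<Sum>\<gamma>\<in>(\<lambda>\<gamma>. \<sigma> \<circ> \<gamma>) ` G. Pr \<gamma>)"
      using sum.reindex[OF comp_inj[OF s], of Pr] by (simp add: o_def)
    also have "\<dots> = g0" unfolding comp_surj[OF s] g0_def ..
    finally show ?thesis .
  qed
  have coefK0: "coeff p i \<in> K0" if pK: "inK K p" and fx: "\<And>\<sigma>. \<sigma> \<in> G \<Longrightarrow> map_poly \<sigma> p = p" for p i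
  proof -
    have "\<sigma> (coeff p i) = coeff p i" if s: "\<sigma> \<in> G" for \<sigma>
      using coeff_mp[OF Ksf hom[OF s], of p i] fx[OF s] by simp
    then have "coeff p i \<in> {x\<in>K. \<forall>\<sigma>\<in>G. \<sigma> x = x}" using pK by (auto simp: inK_def)
    then show ?thesis using fixed by simp
  qed
  have Lsf: "is_subfield L" and K0L: "K0 \<subseteq> L" and zL: "z \<in> L" using L by auto
  have gL: "poly g z \<in> L"
    by (rule sf_poly[OF Lsf _ zL]) (use coefK0[OF gK fixg] K0L in blast)
  have g0L: "poly g0 z \<in> L"
    by (rule sf_poly[OF Lsf _ zL]) (use coefK0[OF g0K fixg0] K0L in blast)
  have pPr: "poly (Pr \<gamma>) z = (\<Prod>\<delta>\<in>G - {\<gamma>}. z - \<delta> z)" for \<gamma>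
    by (simp add: Pr_def lin_def poly_prod)
  have Pr0: "poly (Pr \<gamma>) z = 0" if "\<gamma> \<in> G" "\<gamma> \<noteq> (\<lambda>x. x)" for \<gamma>
  proof -
    have "(\<lambda>x. x) \<in> G - {\<gamma>}" using G_id that by auto
    then show ?thesis unfolding pPr using G_finite by (intro prod_zero) auto
  qed
  have "poly g z = (\<Sum>\<gamma>\<in>G. \<gamma> y * poly (Pr \<gamma>) z)" by (simp add: g_def poly_sum)
  also have "\<dots> = (\<lambda>x. x) y * poly (Pr (\<lambda>x. x)) z"
    by (rule sum.remove[OF G_finite G_id, THEN trans]) (simp add: sum.neutral Pr0)
  finally have gz: "poly g z = y * poly (Pr (\<lambda>x. x)) z" by simp
  have "poly g0 z = (\<Sum>\<gamma>\<in>G. poly (Pr \<gamma>) z)" by (simp add: g0_def poly_sum)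
  also have "\<dots> = poly (Pr (\<lambda>x. x)) z"
    by (rule sum.remove[OF G_finite G_id, THEN trans]) (simp add: sum.neutral Pr0)
  finally have g0z: "poly g0 z = poly (Pr (\<lambda>x. x)) z" .
  have nz: "poly (Pr (\<lambda>x. x)) z \<noteq> 0"
    unfolding pPr using G_finite dist[OF G_id] by (auto simp: prod_zero_iff)
  have "y = poly g z / poly g0 z" using gz g0z nz by simp
  then show "y \<in> L" using sf_divide[OF Lsf gL g0L] by simp
qed

end


lemma algint_prod: "(\<And>a. a \<in> A \<Longrightarrow> algebraic_int (f a)) \<Longrightarrow> algebraic_int (\<Prod>a\<in>A. (f a :: complex))"
  by (induction A rule: infinite_finite_induct) (auto intro: algint_mult)

theorem lemma6p4:
  fixes K0 K :: "complex set" and b :: complex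
  assumes "number_field K0"
    and "galois_ext K0 K"
    and "b \<in> ring_of_integers K" and "b \<noteq> 0"
  shows "\<exists>z\<in>ring_of_integers K. \<not> is_unit_in (ring_of_integers K) z \<and>
           primitive_element K0 K z \<and>
           (\<forall>\<gamma>\<in>Gal K0 K. \<forall>\<delta>\<in>Gal K0 K. \<gamma> \<noteq> \<delta> \<longrightarrow>
               coprime_in (ring_of_integers K) (\<gamma> z) (\<delta> z)) \<and>
           (\<forall>\<gamma>\<in>Gal K0 K. coprime_in (ring_of_integers K) (\<gamma> z) b)"
proof -
  interpret setting K0 K using assms(1,2) by unfold_locales
  have bK: "b \<in> K" and bi: "algebraic_int b" using assms(3) by (auto simp: ring_of_integers_def)
  obtain w where wK: "w \<in> K" and wnz: "w \<noteq> 0" and wi: "algebraic_int w"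
    and wd: "\<And>\<sigma> \<tau>. \<sigma> \<in> G \<Longrightarrow> \<tau> \<in> G \<Longrightarrow> \<sigma> \<noteq> \<tau> \<Longrightarrow> \<sigma> w \<noteq> \<tau> w"
    using exists_w by blast
  have GwK: "\<sigma> w \<in> K" if "\<sigma> \<in> G" for \<sigma> using G_in[OF that wK] .
  have Gwi: "algebraic_int (\<sigma> w)" if "\<sigma> \<in> G" for \<sigma> using G_algint[OF that wK wi] .
  define P where "P = {p \<in> G \<times> G. fst p \<noteq> snd p}"
  have finP: "finite P" unfolding P_def using G_finite by auto
  define dif :: "(complex \<Rightarrow> complex) \<times> (complex \<Rightarrow> complex) \<Rightarrow> complex" where "dif = (\<lambda>p. fst p w - snd p w)"
  have difK: "dif p \<in> K" if "p \<in> P" for p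
    using that GwK unfolding P_def dif_def by (auto intro: sf_diff[OF Ksf])
  have difi: "algebraic_int (dif p)" if "p \<in> P" for p
    using that Gwi unfolding P_def dif_def by (auto intro: algint_diff)
  have difnz: "dif p \<noteq> 0" if "p \<in> P" for p
    using that wd unfolding P_def dif_def by auto
  define D where "D = b * (\<Prod>p\<in>P. dif p)"
  have DK: "D \<in> K" unfolding D_def using difK bK by (intro sf_mult[OF Ksf] sf_prod[OF Ksf]) auto
  have Di: "algebraic_int D" unfolding D_def using difi bi by (intro algint_mult algint_prod) auto
  have Dnz: "D \<noteq> 0" unfolding D_def using difnz assms(4) finP by auto
  obtain c0 :: int and e where c0: "c0 \<noteq> 0" and eK: "e \<in> K" and ei: "algebraic_int e"
    and c0e: "of_int c0 = D * e"
    using int_multiple[OF Di Dnz Ksf DK] by blast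
  obtain m :: nat where m: "\<And>y. algebraic_int y \<Longrightarrow> (1 + of_int (int m * c0) * w) * y \<noteq> 1"
    using choose_c[OF wi wnz c0] by blast
  define c :: int where "c = int m * c0"
  define z where "z = 1 + of_int c * w"
  have zK: "z \<in> K" unfolding z_def by (intro sf_add[OF Ksf] sf_mult[OF Ksf] sf_1[OF Ksf] sf_int[OF Ksf] wK)
  have ci: "algebraic_int (of_int c :: complex)" by (intro int_imp_algebraic_int) auto
  have zi: "algebraic_int z" unfolding z_def
    by (intro algint_add algint_mult ci wi) (auto intro: int_imp_algebraic_int)
  have zR: "z \<in> ring_of_integers K" using zK zi by (simp add: ring_of_integers_def)
  have Gz: "\<sigma> z = 1 + of_int c * \<sigma> w" if s: "\<sigma> \<in> G" for \<sigma>
  proof -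
    have cK: "(of_int c :: complex) \<in> K" by (rule sf_int[OF Ksf])
    have "\<sigma> z = \<sigma> 1 + \<sigma> (of_int c * w)" unfolding z_def
      by (rule G_add[OF s sf_1[OF Ksf] sf_mult[OF Ksf cK wK]])
    also have "\<dots> = 1 + of_int c * \<sigma> w"
      using G_mult[OF s cK wK] G_fixQ[OF s, of 1] G_fixQ[OF s, of "of_int c"] by simp
    finally show ?thesis .
  qed
  have GzK: "\<sigma> z \<in> K" if "\<sigma> \<in> G" for \<sigma> using G_in[OF that zK] .
  have Gzi: "algebraic_int (\<sigma> z)" if "\<sigma> \<in> G" for \<sigma> using G_algint[OF that zK zi] .
  have nonunit: "\<not> is_unit_in (ring_of_integers K) z"
  proof
    assume "is_unit_in (ring_of_integers K) z"
    then obtain y where "y \<in> ring_of_integers K" "z * y = 1" unfolding is_unit_in_def by blast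
    then have "algebraic_int y" "(1 + of_int (int m * c0) * w) * y = 1"
      by (auto simp: ring_of_integers_def z_def c_def)
    then show False using m by blast
  qed
  have prim: "primitive_element K0 K z"
  proof (rule primitive[OF zK])
    fix \<sigma> \<tau> assume st: "\<sigma> \<in> G" "\<tau> \<in> G" "\<sigma> \<noteq> \<tau>"
    show "\<sigma> z \<noteq> \<tau> z"
    proof
      assume "\<sigma> z = \<tau> z"
      then have "of_int c * \<sigma> w = of_int c * \<tau> w" using Gz[OF st(1)] Gz[OF st(2)] by simp
      moreover have "c \<noteq> 0"
      proof
        assume "c = 0"
        then have "(1 + of_int (int m * c0) * w) * 1 = 1" by (simp add: c_def)
        then show False using m[of 1] by simp
      qed
      ultimately have "\<sigma> w = \<tau> w" by simp
      then show False using wd[OF st] by simp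
    qed
  qed
  have cdecomp: "of_int c = dif p * (of_int (int m) * b * (\<Prod>q\<in>P - {p}. dif q) * e)" if p: "p \<in> P" for p
  proof -
    have "(\<Prod>q\<in>P. dif q) = dif p * (\<Prod>q\<in>P - {p}. dif q)" using prod.remove[OF finP p] .
    then show ?thesis using c0e by (simp add: c_def D_def mult_ac)
  qed
  have pairs: "coprime_in (ring_of_integers K) (\<gamma> z) (\<delta> z)"
    if g: "\<gamma> \<in> G" and d: "\<delta> \<in> G" and ne: "\<gamma> \<noteq> \<delta>" for \<gamma> \<delta>
  proof -
    have p: "(\<gamma>, \<delta>) \<in> P" using g d ne by (simp add: P_def)
    define e' where "e' = of_int (int m) * b * (\<Prod>q\<in>P - {(\<gamma>, \<delta>)}. dif q) * e"
    have e'K: "e' \<in> K" unfolding e'_def using difK bK eK p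
      by (intro sf_mult[OF Ksf] sf_prod[OF Ksf] sf_int[OF Ksf]) auto
    have e'i: "algebraic_int e'" unfolding e'_def using difi bi ei p
      by (intro algint_mult algint_prod) (auto intro: int_imp_algebraic_int)
    have hc: "of_int c = (\<gamma> w - \<delta> w) * e'" using cdecomp[OF p] by (simp add: e'_def dif_def)
    define gw where "gw = \<gamma> w"
    define dw where "dw = \<delta> w"
    define cc :: complex where "cc = of_int c"
    define u where "u = e' * gw ^ 2 - cc * gw + 1"
    define v where "v = - (e' * gw ^ 2)"
    have "u * (1 + cc * gw) + v * (1 + cc * dw) = 1 + cc * gw ^ 2 * ((gw - dw) * e' - cc)"
      unfolding u_def v_def by (simp add: algebra_simps power2_eq_square)
    also have "(gw - dw) * e' - cc = 0" using hc by (simp add: gw_def dw_def cc_def)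
    finally have eq: "u * \<gamma> z + v * \<delta> z = 1"
      using Gz[OF g] Gz[OF d] by (simp add: gw_def dw_def cc_def)
    have uK: "u \<in> K" unfolding u_def cc_def gw_def using e'K GwK[OF g]
      by (intro sf_add[OF Ksf] sf_diff[OF Ksf] sf_mult[OF Ksf] sf_power[OF Ksf] sf_int[OF Ksf] sf_1[OF Ksf]) auto
    have vK: "v \<in> K" unfolding v_def gw_def using e'K GwK[OF g]
      by (intro sf_minus[OF Ksf] sf_mult[OF Ksf] sf_power[OF Ksf]) auto
    have powi: "algebraic_int (x ^ n)" if "algebraic_int x" for x :: complex and n
      using that by (induction n) (auto intro: algint_mult)
    have ui: "algebraic_int u" unfolding u_def cc_def gw_def using e'i Gwi[OF g] ci
      by (intro algint_add algint_diff algint_mult powi) auto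
    have vi: "algebraic_int v" unfolding v_def gw_def using e'i Gwi[OF g]
      by (simp add: algint_mult powi)
    show ?thesis unfolding coprime_in_def ring_of_integers_def using uK vK ui vi eq by blast
  qed
  have withb: "coprime_in (ring_of_integers K) (\<gamma> z) b" if g: "\<gamma> \<in> G" for \<gamma>
  proof -
    define eb where "eb = of_int (int m) * (\<Prod>p\<in>P. dif p) * e"
    have hb: "of_int c = b * eb" using c0e by (simp add: eb_def c_def D_def mult_ac)
    have ebK: "eb \<in> K" unfolding eb_def using difK eK
      by (intro sf_mult[OF Ksf] sf_prod[OF Ksf] sf_int[OF Ksf]) auto
    have ebi: "algebraic_int eb" unfolding eb_def using difi ei
      by (intro algint_mult algint_prod) (auto intro: int_imp_algebraic_int)
    define v where "v = - (eb * \<gamma> w)"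
    have eq: "1 * \<gamma> z + v * b = 1" using Gz[OF g] hb by (simp add: v_def algebra_simps)
    have vK: "v \<in> K" unfolding v_def using ebK GwK[OF g] by (intro sf_minus[OF Ksf] sf_mult[OF Ksf])
    have vi: "algebraic_int v" unfolding v_def using ebi Gwi[OF g] by (simp add: algint_mult)
    have oneR: "1 \<in> ring_of_integers K" using sf_1[OF Ksf] by (simp add: ring_of_integers_def)
    show ?thesis unfolding coprime_in_def using oneR vK vi eq
      by (intro bexI[of _ 1] bexI[of _ v]) (auto simp: ring_of_integers_def)
  qed
  show ?thesis
    using zR nonunit prim pairs withb unfolding G_def by blast
qed


end
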